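(* Suppose there exists a constant $C<\infty$ such that $E X^*_{2N}\le E X^*_N+C$ for every integer $N\ge1$. Then the whole sequence $\{X_N^*-E X_N^*\}_{N\ge1}$ is tight.
   Context: For an integer $N\ge 1$ let $V_N=(\{0,1,\dots,N\})^2\subset\mathbb Z^2$, $V_N^o=(\{1,\dots,N-1\})^2$, and $\partial V_N=V_N\setminus V_N^o$. Let $\{w_m\}_{m\ge0}$ be simple random walk on $\mathbb Z^2$ started in $V_N$, killed at $\tau=\min\{m: w_m\in\partial V_N\}$, and define the Green function $G_N(x,y)=E^x\big(\sum_{m=0}^{\tau}\mathbf 1_{\{w_m=y\}}\big)$ for $x,y\in V_N$ (with $E^x$ expectation for the walk started at $x$; in particular $G_N(x,y)=0$ if $x$ or $y\in\partial V_N$). The discrete Gaussian free field (GFF) on $V_N$ with Dirichlet boundary conditions is the centered Gaussian field $\{X^N_z\}_{z\in V_N}$ with covariance $E[X^N_xX^N_y]=G_N(x,y)$. Write $X_N^*=\max_{z\in V_N}X^N_z$. *)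

theory Defs
  imports "HOL-Probability.Probability"
begin

type_synonym site = "int \<times> int"

definition box :: "nat \<Rightarrow> site set" where
  "box N = {0..int N} \<times> {0..int N}"

definition box_int :: "nat \<Rightarrow> site set" where
  "box_int N = {1..int N - 1} \<times> {1..int N - 1}"

definition adj :: "site \<Rightarrow> site \<Rightarrow> bool" where
  "adj x y \<longleftrightarrow> \<bar>fst x - fst y\<bar> + \<bar>snd x - snd y\<bar> = 1"

text \<open>One-step transition kernel of simple random walk killed upon hitting the boundary,
  restricted to interior sites.\<close>
definition kill_kernel :: "nat \<Rightarrow> site \<Rightarrow> site \<Rightarrow> real" where
  "kill_kernel N x y = (if x \<in> box_int N \<and> y \<in> box_int N \<and> adj x y then 1/4 else 0)"

text \<open>kill_pow N m x y = P^x(w_m = y and w_0,...,w_m all in the interior), for interior y.\<close>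
fun kill_pow :: "nat \<Rightarrow> nat \<Rightarrow> site \<Rightarrow> site \<Rightarrow> real" where
  "kill_pow N 0 x y = (if x = y then 1 else 0)"
| "kill_pow N (Suc m) x y = (\<Sum>z\<in>box_int N. kill_kernel N x z * kill_pow N m z y)"

text \<open>Green function G_N(x,y) = E^x (sum_{m=0}^{tau} 1{w_m = y}), which equals
  sum_m P^x(w_m = y, m < tau) for interior y; set to 0 when x or y is on the boundary.\<close>
definition green :: "nat \<Rightarrow> site \<Rightarrow> site \<Rightarrow> real" where
  "green N x y = (if x \<in> box_int N \<and> y \<in> box_int N then (\<Sum>m. kill_pow N m x y) else 0)"

definition centered_gaussian_field ::
  "'a measure \<Rightarrow> 'i set \<Rightarrow> ('i \<Rightarrow> 'a \<Rightarrow> real) \<Rightarrow> ('i \<Rightarrow> 'i \<Rightarrow> real) \<Rightarrow> bool" where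
  "centered_gaussian_field M V X K \<longleftrightarrow>
     prob_space M \<and> (\<forall>z\<in>V. X z \<in> borel_measurable M) \<and>
     (\<forall>t :: 'i \<Rightarrow> real.
        (CLINT \<omega>|M. iexp (\<Sum>z\<in>V. t z * X z \<omega>))
          = complex_of_real (exp (- (\<Sum>x\<in>V. \<Sum>y\<in>V. t x * t y * K x y) / 2)))"

definition is_dgff :: "'a measure \<Rightarrow> nat \<Rightarrow> (site \<Rightarrow> 'a \<Rightarrow> real) \<Rightarrow> bool" where
  "is_dgff M N X \<longleftrightarrow> centered_gaussian_field M (box N) X (green N)"

definition field_max :: "nat \<Rightarrow> (site \<Rightarrow> 'a \<Rightarrow> real) \<Rightarrow> 'a \<Rightarrow> real" where
  "field_max N X \<omega> = Max ((\<lambda>z. X z \<omega>) ` box N)"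

end

theory Submission
  imports Defs
begin


lemma char_distr_eq: "prob_space P \<Longrightarrow> Y \<in> borel_measurable P \<Longrightarrow>
   char (distr P borel Y) t = (CLINT \<omega>|P. iexp (t * Y \<omega>))"
  unfolding char_def by (subst integral_distr) auto

lemma gauss1d_distr:
  assumes P: "prob_space P" and Y: "Y \<in> borel_measurable P" and s: "\<sigma> \<ge> 0"
    and ch: "\<And>t. (CLINT \<omega>|P. iexp (t * Y \<omega>)) = complex_of_real (exp (- (t*t*\<sigma>)/2))"
  shows "distr P borel Y = distr std_normal_distribution borel (\<lambda>x. sqrt \<sigma> * x)"
proof (rule Levy_uniqueness)
  interpret P: prob_space P by fact
  show "real_distribution (distr P borel Y)"
    by (simp add: P.real_distribution_distr Y)
  show "real_distribution (distr std_normal_distribution borel (\<lambda>x. sqrt \<sigma> * x))"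
    by (rule prob_space.real_distribution_distr[OF prob_space_normal_density]) (simp, measurable)
  show "char (distr P borel Y) = char (distr std_normal_distribution borel (\<lambda>x. sqrt \<sigma> * x))"
  proof
    fix t
    have "char (distr std_normal_distribution borel (\<lambda>x. sqrt \<sigma> * x)) t
        = char std_normal_distribution (t * sqrt \<sigma>)"
      unfolding char_def by (subst integral_distr) (auto simp: mult.assoc)
    also have "\<dots> = complex_of_real (exp (- (t*t*\<sigma>)/2))"
      using s by (simp add: char_std_normal_distribution power2_eq_square)
    finally show "char (distr P borel Y) t = char (distr std_normal_distribution borel (\<lambda>x. sqrt \<sigma> * x)) t"
      using char_distr_eq[OF P Y] ch by simp
  qed
qed

lemma gauss1d:
  assumes P: "prob_space P" and Y: "Y \<in> borel_measurable P" and s: "\<sigma> \<ge> 0"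
    and ch: "\<And>t. (CLINT \<omega>|P. iexp (t * Y \<omega>)) = complex_of_real (exp (- (t*t*\<sigma>)/2))"
  shows "integrable P Y" "integral\<^sup>L P Y = 0" "\<sigma> = 0 \<Longrightarrow> AE \<omega> in P. Y \<omega> = 0"
proof -
  note D = gauss1d_distr[OF assms]
  have m: "(\<lambda>x. sqrt \<sigma> * x) \<in> borel_measurable std_normal_distribution" by simp
  have i1: "integrable std_normal_distribution (\<lambda>x. sqrt \<sigma> * x)"
    using integrable_std_normal_distribution_moment[of 1] by simp
  have "integrable (distr P borel Y) (\<lambda>x. x)"
    unfolding D using i1 by (subst integrable_distr_eq) auto
  then show "integrable P Y" using Y by (subst (asm) integrable_distr_eq) auto
  have "integral\<^sup>L P Y = integral\<^sup>L (distr P borel Y) (\<lambda>x. x)"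
    using Y by (subst integral_distr) auto
  also have "\<dots> = integral\<^sup>L std_normal_distribution (\<lambda>x. sqrt \<sigma> * x)"
    unfolding D by (subst integral_distr) auto
  also have "\<dots> = 0" using integral_std_normal_distribution_moment_odd[of 1] by simp
  finally show "integral\<^sup>L P Y = 0" .
  assume "\<sigma> = 0"
  then have "AE x in distr P borel Y. x = 0" unfolding D
    by (subst AE_distr_iff) auto
  then show "AE \<omega> in P. Y \<omega> = 0" using Y by (subst (asm) AE_distr_iff) auto
qed


lemma (in prob_space) integrable_iexp_real:
  "f \<in> borel_measurable M \<Longrightarrow> integrable M (\<lambda>x. iexp (f x))"
  using integrable_iexp[of "\<lambda>x. complex_of_real (f x)"] by simp

lemma (in prob_space) integrable_bounded_real:
  fixes f :: "'a \<Rightarrow> real"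
  shows "f \<in> borel_measurable M \<Longrightarrow> (\<And>x. \<bar>f x\<bar> \<le> B) \<Longrightarrow> integrable M f"
  by (rule integrable_const_bound[of _ B]) auto

lemma (in prob_space) integrable_bounded_cmult_iexp:
  fixes f :: "'a \<Rightarrow> real"
  shows "f \<in> borel_measurable M \<Longrightarrow> g \<in> borel_measurable M \<Longrightarrow> (\<And>x. \<bar>f x\<bar> \<le> B) \<Longrightarrow>
    integrable M (\<lambda>x. complex_of_real (f x) * iexp (g x))"
  by (rule integrable_const_bound[of _ B]) (auto simp: norm_mult)

lemma iexp_add: "iexp (a + b) = iexp a * iexp b"
  by (simp add: distrib_left exp_add)

lemma cos_iexp_mult:
  "complex_of_real (cos (t + p)) * iexp a = (iexp p * iexp (a + t) + iexp (-p) * iexp (a - t)) / 2"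
proof -
  have "complex_of_real (cos (t + p)) = (iexp (t+p) + iexp (-(t+p))) / 2"
    by (simp add: cos_exp_eq cos_of_real[symmetric] algebra_simps)
  moreover have "iexp p * iexp (a + t) = iexp (t + p) * iexp a"
    by (simp add: mult_exp_exp algebra_simps)
  moreover have "iexp (-p) * iexp (a - t) = iexp (-(t + p)) * iexp a"
    by (simp add: mult_exp_exp algebra_simps)
  ultimately show ?thesis
    by (simp add: algebra_simps add_divide_distrib)
qed

lemma cint_cos:
  assumes P: "prob_space P" and A: "A \<in> borel_measurable P" and th: "\<theta> \<in> borel_measurable P"
  shows "(CLINT \<omega>|P. complex_of_real (cos (\<theta> \<omega> + p)) * iexp (s * A \<omega>))
    = (iexp p * (CLINT \<omega>|P. iexp (s * A \<omega> + 1 * \<theta> \<omega>))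
       + iexp (-p) * (CLINT \<omega>|P. iexp (s * A \<omega> + (-1) * \<theta> \<omega>))) / 2"
proof -
  interpret prob_space P by fact
  have i1: "integrable P (\<lambda>\<omega>. iexp (s * A \<omega> + 1 * \<theta> \<omega>))"
    by (rule integrable_iexp_real) (use A th in measurable)
  have i2: "integrable P (\<lambda>\<omega>. iexp (s * A \<omega> + (-1) * \<theta> \<omega>))"
    by (rule integrable_iexp_real) (use A th in measurable)
  show ?thesis
    using i1 i2 unfolding cos_iexp_mult
    by (simp add: integral_add integral_mult_right integral_divide_zero)
qed

lemma prob_space_density_real:
  assumes P: "prob_space P" and w: "w \<in> borel_measurable P" "\<And>\<omega>. \<omega> \<in> space P \<Longrightarrow> 0 \<le> w \<omega>"
    and i: "integrable P w" and one: "integral\<^sup>L P w = 1"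
  shows "prob_space (density P (\<lambda>\<omega>. ennreal (w \<omega>)))"
proof (rule prob_spaceI)
  have "emeasure (density P (\<lambda>\<omega>. ennreal (w \<omega>))) (space P) = (\<integral>\<^sup>+ \<omega>. ennreal (w \<omega>) \<partial>P)"
    using w by (subst emeasure_density) (auto intro!: nn_integral_cong simp: indicator_def)
  also have "\<dots> = ennreal (integral\<^sup>L P w)"
    using w i by (intro nn_integral_eq_integral) auto
  finally show "emeasure (density P (\<lambda>\<omega>. ennreal (w \<omega>))) (space (density P (\<lambda>\<omega>. ennreal (w \<omega>)))) = 1"
    using one by simp
qed

lemma wchar:
  fixes p s :: real
  assumes P: "prob_space P" and A[measurable]: "A \<in> borel_measurable P" and th[measurable]: "\<theta> \<in> borel_measurable P"
  defines "c \<equiv> (\<integral>\<omega>. cos (\<theta> \<omega> + p) \<partial>P)"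
  defines "D \<equiv> density P (\<lambda>\<omega>. ennreal ((2 + cos (\<theta> \<omega> + p)) / (2 + c)))"
  shows "prob_space D"
    and "complex_of_real c = (iexp p * (CLINT \<omega>|P. iexp (0 * A \<omega> + 1 * \<theta> \<omega>))
       + iexp (-p) * (CLINT \<omega>|P. iexp (0 * A \<omega> + (-1) * \<theta> \<omega>))) / 2"
    and "char (distr D borel A) s = (2 * (CLINT \<omega>|P. iexp (s * A \<omega> + 0 * \<theta> \<omega>))
       + (iexp p * (CLINT \<omega>|P. iexp (s * A \<omega> + 1 * \<theta> \<omega>))
       + iexp (-p) * (CLINT \<omega>|P. iexp (s * A \<omega> + (-1) * \<theta> \<omega>))) / 2) / (2 + c)"
    and "B \<in> sets borel \<Longrightarrow> (\<integral>x. indicator B x \<partial>distr D borel A)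
       = (2 * (\<integral>\<omega>. indicator B (A \<omega>) \<partial>P) + (\<integral>\<omega>. cos (\<theta> \<omega> + p) * indicator B (A \<omega>) \<partial>P)) / (2 + c)"
proof -
  interpret prob_space P by fact
  have ic: "integrable P (\<lambda>\<omega>. cos (\<theta> \<omega> + p))"
    by (rule integrable_bounded_real[of _ 1]) auto
  have "(\<integral>\<omega>. -1 \<partial>P) \<le> c" unfolding c_def
    by (intro integral_mono ic) auto
  then have c1: "-1 \<le> c" by (simp add: prob_space)
  have w0: "0 \<le> (2 + cos (\<theta> \<omega> + p)) / (2 + c)" for \<omega>
    using c1 cos_ge_minus_one[of "\<theta> \<omega> + p"] by (intro divide_nonneg_nonneg) linarith+
  have iw: "integrable P (\<lambda>\<omega>. (2 + cos (\<theta> \<omega> + p)) / (2 + c))"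
    using ic by (intro integrable_divide integrable_add) auto
  have "integral\<^sup>L P (\<lambda>\<omega>. (2 + cos (\<theta> \<omega> + p)) / (2 + c)) = (2 + c) / (2 + c)"
    using ic unfolding c_def by (simp add: integral_add prob_space)
  also have "\<dots> = 1" using c1 by simp
  finally have w1: "integral\<^sup>L P (\<lambda>\<omega>. (2 + cos (\<theta> \<omega> + p)) / (2 + c)) = 1" .
  show PD: "prob_space D" unfolding D_def
    by (rule prob_space_density_real[OF P _ w0 iw w1]) measurable
  show "complex_of_real c = (iexp p * (CLINT \<omega>|P. iexp (0 * A \<omega> + 1 * \<theta> \<omega>))
       + iexp (-p) * (CLINT \<omega>|P. iexp (0 * A \<omega> + (-1) * \<theta> \<omega>))) / 2"
    using cint_cos[OF P A th, of p 0] unfolding c_def by simp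
  show "char (distr D borel A) s = (2 * (CLINT \<omega>|P. iexp (s * A \<omega> + 0 * \<theta> \<omega>))
       + (iexp p * (CLINT \<omega>|P. iexp (s * A \<omega> + 1 * \<theta> \<omega>))
       + iexp (-p) * (CLINT \<omega>|P. iexp (s * A \<omega> + (-1) * \<theta> \<omega>))) / 2) / (2 + c)"
  proof -
    have "char (distr D borel A) s = (CLINT \<omega>|D. iexp (s * A \<omega>))"
      unfolding char_def D_def by (subst integral_distr) auto
    also have "\<dots> = (CLINT \<omega>|P. ((2 + cos (\<theta> \<omega> + p)) / (2 + c)) *\<^sub>R iexp (s * A \<omega>))"
      unfolding D_def using w0 by (subst integral_density) auto
    also have "\<dots> = (CLINT \<omega>|P. (2 * iexp (s * A \<omega>) + complex_of_real (cos (\<theta> \<omega> + p)) * iexp (s * A \<omega>)) / (2 + c))"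
      by (intro Bochner_Integration.integral_cong refl) (simp add: scaleR_conv_of_real algebra_simps add_divide_distrib)
    also have "\<dots> = (2 * (CLINT \<omega>|P. iexp (s * A \<omega>)) + (CLINT \<omega>|P. complex_of_real (cos (\<theta> \<omega> + p)) * iexp (s * A \<omega>))) / (2 + c)"
      using integrable_iexp_real[of "\<lambda>\<omega>. s * A \<omega>"] integrable_bounded_cmult_iexp[of "\<lambda>\<omega>. cos (\<theta> \<omega> + p)" "\<lambda>\<omega>. s * A \<omega>" 1]
      by (simp add: integral_add)
    finally show ?thesis using cint_cos[OF P A th, of p s] by simp
  qed
  fix B :: "real set" assume B: "B \<in> sets borel"
  have "(\<integral>x. indicator B x \<partial>distr D borel A) = (\<integral>\<omega>. indicator B (A \<omega>) \<partial>D :: real)"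
    unfolding D_def by (intro integral_distr) (use B in auto)
  also have "\<dots> = (\<integral>\<omega>. ((2 + cos (\<theta> \<omega> + p)) / (2 + c)) * indicator B (A \<omega>) \<partial>P)"
    unfolding D_def using w0 B by (subst integral_density) auto
  also have "\<dots> = (\<integral>\<omega>. (2 * indicator B (A \<omega>) + cos (\<theta> \<omega> + p) * indicator B (A \<omega>)) / (2 + c) \<partial>P)"
    by (intro Bochner_Integration.integral_cong refl) (simp add: algebra_simps add_divide_distrib)
  also have "\<dots> = (2 * (\<integral>\<omega>. indicator B (A \<omega>) \<partial>P) + (\<integral>\<omega>. cos (\<theta> \<omega> + p) * indicator B (A \<omega>) \<partial>P)) / (2 + c)"
    using B integrable_bounded_real[of "\<lambda>\<omega>. indicator B (A \<omega>) :: real" 1]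
      integrable_bounded_real[of "\<lambda>\<omega>. cos (\<theta> \<omega> + p) * indicator B (A \<omega>) :: real" 1]
    by (simp add: integral_add abs_mult indicator_def)
  finally show "(\<integral>x. indicator B x \<partial>distr D borel A)
       = (2 * (\<integral>\<omega>. indicator B (A \<omega>) \<partial>P) + (\<integral>\<omega>. cos (\<theta> \<omega> + p) * indicator B (A \<omega>) \<partial>P)) / (2 + c)" .
qed


lemma weighted_unique:
  fixes p :: real
  assumes P: "prob_space P" and A[measurable]: "A \<in> borel_measurable P" and th[measurable]: "\<theta> \<in> borel_measurable P"
    and Q: "prob_space Q" and A'[measurable]: "A' \<in> borel_measurable Q" and th'[measurable]: "\<theta>' \<in> borel_measurable Q"
    and eq: "\<And>s k. k \<in> {-1,0,1} \<Longrightarrow> (CLINT \<omega>|P. iexp (s * A \<omega> + k * \<theta> \<omega>)) = (CLINT \<omega>|Q. iexp (s * A' \<omega> + k * \<theta>' \<omega>))"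
    and B: "B \<in> sets borel"
  shows "(\<integral>\<omega>. indicator B (A \<omega>) \<partial>P) = (\<integral>\<omega>. indicator B (A' \<omega>) \<partial>Q :: real)"
    and "(\<integral>\<omega>. cos (\<theta> \<omega> + p) * indicator B (A \<omega>) \<partial>P) = (\<integral>\<omega>. cos (\<theta>' \<omega> + p) * indicator B (A' \<omega>) \<partial>Q)"
proof -
  interpret P: prob_space P by fact
  interpret Q: prob_space Q by fact
  have "distr P borel A = distr Q borel A'"
  proof (rule Levy_uniqueness)
    show "real_distribution (distr P borel A)" by (simp add: P.real_distribution_distr)
    show "real_distribution (distr Q borel A')" by (simp add: Q.real_distribution_distr)
    show "char (distr P borel A) = char (distr Q borel A')"
      using eq[of 0] by (auto simp: char_distr_eq[OF P A] char_distr_eq[OF Q A'])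
  qed
  moreover have "(\<integral>\<omega>. indicator B (A \<omega>) \<partial>P) = (\<integral>x. indicator B x \<partial>distr P borel A :: real)"
    by (rule integral_distr[symmetric]) (use B in auto)
  moreover have "(\<integral>\<omega>. indicator B (A' \<omega>) \<partial>Q) = (\<integral>x. indicator B x \<partial>distr Q borel A' :: real)"
    by (rule integral_distr[symmetric]) (use B in auto)
  ultimately show I: "(\<integral>\<omega>. indicator B (A \<omega>) \<partial>P) = (\<integral>\<omega>. indicator B (A' \<omega>) \<partial>Q :: real)"
    by simp
  define cP where "cP = (\<integral>\<omega>. cos (\<theta> \<omega> + p) \<partial>P)"
  define cQ where "cQ = (\<integral>\<omega>. cos (\<theta>' \<omega> + p) \<partial>Q)"
  have "complex_of_real cP = complex_of_real cQ"
    unfolding cP_def cQ_def wchar(2)[OF P A th, of p] wchar(2)[OF Q A' th', of p]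
    using eq[of "1" 0] eq[of "-1" 0] by simp
  then have cc: "cP = cQ" by simp
  define DP where "DP = density P (\<lambda>\<omega>. ennreal ((2 + cos (\<theta> \<omega> + p)) / (2 + cP)))"
  define DQ where "DQ = density Q (\<lambda>\<omega>. ennreal ((2 + cos (\<theta>' \<omega> + p)) / (2 + cQ)))"
  have "distr DP borel A = distr DQ borel A'"
  proof (rule Levy_uniqueness)
    show "real_distribution (distr DP borel A)"
      using wchar(1)[OF P A th, of p] unfolding DP_def cP_def
      by (intro prob_space.real_distribution_distr) auto
    show "real_distribution (distr DQ borel A')"
      using wchar(1)[OF Q A' th', of p] unfolding DQ_def cQ_def
      by (intro prob_space.real_distribution_distr) auto
    show "char (distr DP borel A) = char (distr DQ borel A')"
    proof
      fix s
      show "char (distr DP borel A) s = char (distr DQ borel A') s"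
        unfolding DP_def DQ_def cP_def cQ_def wchar(3)[OF P A th, of p s] wchar(3)[OF Q A' th', of p s]
        using eq[of 0 s] eq[of 1 s] eq[of "-1" s] cc unfolding cP_def cQ_def by simp
    qed
  qed
  then have "(2 * (\<integral>\<omega>. indicator B (A \<omega>) \<partial>P) + (\<integral>\<omega>. cos (\<theta> \<omega> + p) * indicator B (A \<omega>) \<partial>P)) / (2 + cP)
      = (2 * (\<integral>\<omega>. indicator B (A' \<omega>) \<partial>Q) + (\<integral>\<omega>. cos (\<theta>' \<omega> + p) * indicator B (A' \<omega>) \<partial>Q)) / (2 + cQ)"
    using wchar(4)[OF P A th, of B p] wchar(4)[OF Q A' th', of B p] B
    unfolding DP_def DQ_def cP_def cQ_def by simp
  moreover have "-1 \<le> cP"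
  proof -
    have "(\<integral>\<omega>. -1 \<partial>P) \<le> cP" unfolding cP_def
      by (intro integral_mono P.integrable_bounded_real[of _ 1]) auto
    then show ?thesis by (simp add: P.prob_space)
  qed
  ultimately show "(\<integral>\<omega>. cos (\<theta> \<omega> + p) * indicator B (A \<omega>) \<partial>P) = (\<integral>\<omega>. cos (\<theta>' \<omega> + p) * indicator B (A' \<omega>) \<partial>Q)"
    using I cc by (simp add: divide_simps split: if_splits)
qed


lemma cint_lin:
  fixes f g :: "'a \<Rightarrow> real"
  assumes "integrable P f" "integrable P g"
  shows "(CLINT \<omega>|P. (complex_of_real (f \<omega>) + \<i> * complex_of_real (g \<omega>)) / m)
     = (complex_of_real (integral\<^sup>L P f) + \<i> * complex_of_real (integral\<^sup>L P g)) / m"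
proof -
  have "(CLINT \<omega>|P. (complex_of_real (f \<omega>) + \<i> * complex_of_real (g \<omega>)) / m)
     = (CLINT \<omega>|P. (complex_of_real (f \<omega>) + \<i> * complex_of_real (g \<omega>))) / m"
    by (rule integral_divide_zero)
  also have "(CLINT \<omega>|P. (complex_of_real (f \<omega>) + \<i> * complex_of_real (g \<omega>)))
     = (CLINT \<omega>|P. complex_of_real (f \<omega>)) + (CLINT \<omega>|P. \<i> * complex_of_real (g \<omega>))"
    using assms by (intro Bochner_Integration.integral_add integrable_mult_right) auto
  also have "(CLINT \<omega>|P. \<i> * complex_of_real (g \<omega>)) = \<i> * (CLINT \<omega>|P. complex_of_real (g \<omega>))"
    by (rule integral_mult_right_zero)
  finally show ?thesis by simp
qed

lemma char_density_ind:
  assumes P: "prob_space P" and A[measurable]: "A \<in> borel_measurable P" and th[measurable]: "\<theta> \<in> borel_measurable P"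
    and B[measurable]: "B \<in> sets borel" and m: "m > 0"
  shows "(CLINT \<omega>|density P (\<lambda>\<omega>. ennreal (indicator B (A \<omega>) / m)). iexp (\<theta> \<omega>))
    = (complex_of_real (\<integral>\<omega>. cos (\<theta> \<omega> + 0) * indicator B (A \<omega>) \<partial>P)
       + \<i> * complex_of_real (\<integral>\<omega>. cos (\<theta> \<omega> + -(pi/2)) * indicator B (A \<omega>) \<partial>P)) / m"
proof -
  interpret prob_space P by fact
  have "(CLINT \<omega>|density P (\<lambda>\<omega>. ennreal (indicator B (A \<omega>) / m)). iexp (\<theta> \<omega>))
      = (CLINT \<omega>|P. (indicator B (A \<omega>) / m) *\<^sub>R iexp (\<theta> \<omega>))"
    using m by (subst integral_density) auto
  also have "\<dots> = (CLINT \<omega>|P. (complex_of_real (cos (\<theta> \<omega> + 0) * indicator B (A \<omega>))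
       + \<i> * complex_of_real (cos (\<theta> \<omega> + -(pi/2)) * indicator B (A \<omega>))) / m)"
  proof (intro Bochner_Integration.integral_cong refl)
    fix \<omega>
    have "iexp (\<theta> \<omega>) = complex_of_real (cos (\<theta> \<omega>)) + \<i> * complex_of_real (sin (\<theta> \<omega>))"
      by (simp add: cis_conv_exp[symmetric] cis.ctr Complex_eq)
    then show "(indicator B (A \<omega>) / m) *\<^sub>R iexp (\<theta> \<omega>) = (complex_of_real (cos (\<theta> \<omega> + 0) * indicator B (A \<omega>))
       + \<i> * complex_of_real (cos (\<theta> \<omega> + -(pi/2)) * indicator B (A \<omega>))) / m"
      by (simp add: scaleR_conv_of_real cos_diff algebra_simps add_divide_distrib)
  qed
  also have "\<dots> = (complex_of_real (\<integral>\<omega>. cos (\<theta> \<omega> + 0) * indicator B (A \<omega>) \<partial>P)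
       + \<i> * complex_of_real (\<integral>\<omega>. cos (\<theta> \<omega> + -(pi/2)) * indicator B (A \<omega>) \<partial>P)) / m"
  proof -
    have i1: "integrable P (\<lambda>\<omega>. cos (\<theta> \<omega> + 0) * indicator B (A \<omega>) :: real)"
      by (rule integrable_bounded_real[of _ 1]) (auto simp: abs_mult indicator_def)
    have i2: "integrable P (\<lambda>\<omega>. cos (\<theta> \<omega> + -(pi/2)) * indicator B (A \<omega>) :: real)"
      by (rule integrable_bounded_real[of _ 1]) (auto simp: abs_mult indicator_def)
    show ?thesis
      using cint_lin[OF i1 i2, of m] by simp
  qed
  finally show ?thesis .
qed


lemma meas_prod_ind:
  assumes "\<And>z. z \<in> S \<Longrightarrow> U z \<in> borel_measurable P" "\<And>z. z \<in> S \<Longrightarrow> B z \<in> sets borel"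
  shows "(\<lambda>\<omega>. \<Prod>z\<in>S. indicator (B z) (U z \<omega>) :: real) \<in> borel_measurable P"
  using assms by (intro borel_measurable_prod) (auto intro: measurable_compose[OF _ borel_measurable_indicator])

lemma prod_ind_bounds: "0 \<le> (\<Prod>z\<in>S. indicator (B z) (U z \<omega>) :: real)" "(\<Prod>z\<in>S. indicator (B z) (U z \<omega>) :: real) \<le> 1"
  by (auto intro: prod_nonneg prod_le_1 simp: indicator_def)

lemma sum_insert_split:
  fixes U :: "'i \<Rightarrow> 'a \<Rightarrow> real"
  assumes "finite F" "d \<notin> F"
  shows "(\<Sum>z\<in>insert d F. ((\<lambda>z. k * t' z)(d := s)) z * U z \<omega>) = s * U d \<omega> + k * (\<Sum>z\<in>F. t' z * U z \<omega>)"
proof -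
  have "(\<Sum>z\<in>F. ((\<lambda>z. k * t' z)(d := s)) z * U z \<omega>) = (\<Sum>z\<in>F. k * (t' z * U z \<omega>))"
    using assms by (intro sum.cong) (auto simp: mult.assoc)
  then show ?thesis using assms by (simp add: sum_distrib_left)
qed

lemma mv_rect:
  assumes "finite S"
  shows "\<And>(P::'a measure) (Q::'b measure) U V B. prob_space P \<Longrightarrow> prob_space Q \<Longrightarrow>
    (\<And>z. z \<in> S \<Longrightarrow> U z \<in> borel_measurable P) \<Longrightarrow> (\<And>z. z \<in> S \<Longrightarrow> V z \<in> borel_measurable Q) \<Longrightarrow>
    (\<And>t. (CLINT \<omega>|P. iexp (\<Sum>z\<in>S. t z * U z \<omega>)) = (CLINT \<omega>|Q. iexp (\<Sum>z\<in>S. t z * V z \<omega>))) \<Longrightarrow>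
    (\<And>z. z \<in> S \<Longrightarrow> B z \<in> sets borel) \<Longrightarrow>
    (\<integral>\<omega>. (\<Prod>z\<in>S. indicator (B z) (U z \<omega>)) \<partial>P) = (\<integral>\<omega>. (\<Prod>z\<in>S. indicator (B z) (V z \<omega>)) \<partial>Q :: real)"
  using assms
proof (induction S rule: finite_induct)
  case (empty P Q U V B)
  then show ?case by (simp add: prob_space.prob_space)
next
  case (insert d F P Q U V B)
  interpret P: prob_space P by fact
  interpret Q: prob_space Q by fact
  have Um: "\<And>z. z \<in> F \<Longrightarrow> U z \<in> borel_measurable P" "U d \<in> borel_measurable P" using insert by auto
  have Vm: "\<And>z. z \<in> F \<Longrightarrow> V z \<in> borel_measurable Q" "V d \<in> borel_measurable Q" using insert by auto
  have Bm: "\<And>z. z \<in> F \<Longrightarrow> B z \<in> sets borel" "B d \<in> sets borel" using insert by auto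
  have thP: "(\<lambda>\<omega>. \<Sum>z\<in>F. t' z * U z \<omega>) \<in> borel_measurable P" for t'
    using Um by (intro borel_measurable_sum) auto
  have thQ: "(\<lambda>\<omega>. \<Sum>z\<in>F. t' z * V z \<omega>) \<in> borel_measurable Q" for t'
    using Vm by (intro borel_measurable_sum) auto
  have eqk: "(CLINT \<omega>|P. iexp (s * U d \<omega> + k * (\<Sum>z\<in>F. t' z * U z \<omega>)))
     = (CLINT \<omega>|Q. iexp (s * V d \<omega> + k * (\<Sum>z\<in>F. t' z * V z \<omega>)))" for s k t'
    using insert.prems(5)[of "(\<lambda>z. k * t' z)(d := s)"]
    unfolding sum_insert_split[OF insert.hyps] .
  note WU = weighted_unique[OF insert.prems(1) Um(2) thP insert.prems(2) Vm(2) thQ eqk Bm(2)]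
  define m where "m = (\<integral>\<omega>. indicator (B d) (U d \<omega>) \<partial>P :: real)"
  have mQ: "m = (\<integral>\<omega>. indicator (B d) (V d \<omega>) \<partial>Q :: real)"
    unfolding m_def by (rule WU(1))
  have m0: "m \<ge> 0" unfolding m_def by (intro integral_nonneg_AE) auto
  have PiP: "(\<Prod>z\<in>insert d F. indicator (B z) (U z \<omega>)) = indicator (B d) (U d \<omega>) * (\<Prod>z\<in>F. indicator (B z) (U z \<omega>) :: real)" for \<omega>
    using insert.hyps by simp
  have PiQ: "(\<Prod>z\<in>insert d F. indicator (B z) (V z \<omega>)) = indicator (B d) (V d \<omega>) * (\<Prod>z\<in>F. indicator (B z) (V z \<omega>) :: real)" for \<omega>
    using insert.hyps by simp
  have mPF: "(\<lambda>\<omega>. \<Prod>z\<in>F. indicator (B z) (U z \<omega>) :: real) \<in> borel_measurable P"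
    using Um Bm by (intro meas_prod_ind) auto
  have mQF: "(\<lambda>\<omega>. \<Prod>z\<in>F. indicator (B z) (V z \<omega>) :: real) \<in> borel_measurable Q"
    using Vm Bm by (intro meas_prod_ind) auto
  have iP: "integrable P (\<lambda>\<omega>. indicator (B d) (U d \<omega>) * (\<Prod>z\<in>F. indicator (B z) (U z \<omega>) :: real))"
    using mPF Um Bm prod_ind_bounds[where S=F and B=B and U=U]
    by (intro P.integrable_bounded_real[of _ 1]) (auto simp: indicator_def)
  have iQ: "integrable Q (\<lambda>\<omega>. indicator (B d) (V d \<omega>) * (\<Prod>z\<in>F. indicator (B z) (V z \<omega>) :: real))"
    using mQF Vm Bm prod_ind_bounds[where S=F and B=B and U=V]
    by (intro Q.integrable_bounded_real[of _ 1]) (auto simp: indicator_def)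
  have iPd: "integrable P (\<lambda>\<omega>. indicator (B d) (U d \<omega>) :: real)"
    using Um Bm by (intro P.integrable_bounded_real[of _ 1]) (auto simp: indicator_def)
  have iQd: "integrable Q (\<lambda>\<omega>. indicator (B d) (V d \<omega>) :: real)"
    using Vm Bm by (intro Q.integrable_bounded_real[of _ 1]) (auto simp: indicator_def)
  show ?case
  proof (cases "m = 0")
    case True
    have "(\<integral>\<omega>. indicator (B d) (U d \<omega>) * (\<Prod>z\<in>F. indicator (B z) (U z \<omega>)) \<partial>P) \<le> m"
      unfolding m_def using iP iPd Um Bm prod_ind_bounds[where S=F and B=B and U=U]
      by (intro integral_mono) (auto simp: indicator_def)
    moreover have "(\<integral>\<omega>. indicator (B d) (U d \<omega>) * (\<Prod>z\<in>F. indicator (B z) (U z \<omega>)) \<partial>P :: real) \<ge> 0"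
      by (intro Bochner_Integration.integral_nonneg mult_nonneg_nonneg prod_ind_bounds) auto
    moreover have "(\<integral>\<omega>. indicator (B d) (V d \<omega>) * (\<Prod>z\<in>F. indicator (B z) (V z \<omega>)) \<partial>Q) \<le> m"
      unfolding mQ using iQ iQd Vm Bm prod_ind_bounds[where S=F and B=B and U=V]
      by (intro integral_mono) (auto simp: indicator_def)
    moreover have "(\<integral>\<omega>. indicator (B d) (V d \<omega>) * (\<Prod>z\<in>F. indicator (B z) (V z \<omega>)) \<partial>Q :: real) \<ge> 0"
      by (intro Bochner_Integration.integral_nonneg mult_nonneg_nonneg prod_ind_bounds) auto
    ultimately show ?thesis unfolding PiP PiQ using True by linarith
  next
    case False
    then have mpos: "m > 0" using m0 by simp
    define P' where "P' = density P (\<lambda>\<omega>. ennreal (indicator (B d) (U d \<omega>) / m))"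
    define Q' where "Q' = density Q (\<lambda>\<omega>. ennreal (indicator (B d) (V d \<omega>) / m))"
    have PP': "prob_space P'" unfolding P'_def
    proof (rule prob_space_density_real[OF insert.prems(1)])
      show "(\<lambda>\<omega>. indicator (B d) (U d \<omega>) / m) \<in> borel_measurable P" using Um Bm by measurable
      show "integrable P (\<lambda>\<omega>. indicator (B d) (U d \<omega>) / m)"
        using Um Bm by (intro integrable_divide P.integrable_bounded_real[of _ 1]) (auto simp: indicator_def)
      show "integral\<^sup>L P (\<lambda>\<omega>. indicator (B d) (U d \<omega>) / m) = 1"
        using mpos unfolding m_def by simp
    qed (use mpos in auto)
    have QQ': "prob_space Q'" unfolding Q'_def
    proof (rule prob_space_density_real[OF insert.prems(2)])
      show "(\<lambda>\<omega>. indicator (B d) (V d \<omega>) / m) \<in> borel_measurable Q" using Vm Bm by measurable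
      show "integrable Q (\<lambda>\<omega>. indicator (B d) (V d \<omega>) / m)"
        using Vm Bm by (intro integrable_divide Q.integrable_bounded_real[of _ 1]) (auto simp: indicator_def)
      show "integral\<^sup>L Q (\<lambda>\<omega>. indicator (B d) (V d \<omega>) / m) = 1"
        using mpos unfolding mQ by simp
    qed (use mpos in auto)
    have IH: "(\<integral>\<omega>. (\<Prod>z\<in>F. indicator (B z) (U z \<omega>)) \<partial>P') = (\<integral>\<omega>. (\<Prod>z\<in>F. indicator (B z) (V z \<omega>)) \<partial>Q' :: real)"
    proof (rule insert.IH[OF PP' QQ'])
      show "U z \<in> borel_measurable P'" if "z \<in> F" for z using Um that unfolding P'_def by simp
      show "V z \<in> borel_measurable Q'" if "z \<in> F" for z using Vm that unfolding Q'_def by simp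
      show "B z \<in> sets borel" if "z \<in> F" for z using Bm that by simp
      fix t :: "'c \<Rightarrow> real"
      show "(CLINT \<omega>|P'. iexp (\<Sum>z\<in>F. t z * U z \<omega>)) = (CLINT \<omega>|Q'. iexp (\<Sum>z\<in>F. t z * V z \<omega>))"
        unfolding P'_def Q'_def
        unfolding char_density_ind[OF insert.prems(1) Um(2) thP Bm(2) mpos]
        unfolding mQ
        unfolding char_density_ind[OF insert.prems(2) Vm(2) thQ Bm(2) mpos[unfolded mQ]]
        using WU(2)[of t 0] WU(2)[of t "-(pi/2)"] by simp
    qed
    have "(\<integral>\<omega>. (\<Prod>z\<in>F. indicator (B z) (U z \<omega>)) \<partial>P') = (\<integral>\<omega>. (indicator (B d) (U d \<omega>) / m) * (\<Prod>z\<in>F. indicator (B z) (U z \<omega>)) \<partial>P)"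
      unfolding P'_def using mpos Um Bm mPF by (subst integral_density) auto
    also have "\<dots> = (\<integral>\<omega>. (\<Prod>z\<in>insert d F. indicator (B z) (U z \<omega>)) \<partial>P) / m"
      unfolding PiP by simp
    finally have L: "(\<integral>\<omega>. (\<Prod>z\<in>F. indicator (B z) (U z \<omega>)) \<partial>P') = (\<integral>\<omega>. (\<Prod>z\<in>insert d F. indicator (B z) (U z \<omega>)) \<partial>P) / m" .
    have "(\<integral>\<omega>. (\<Prod>z\<in>F. indicator (B z) (V z \<omega>)) \<partial>Q') = (\<integral>\<omega>. (indicator (B d) (V d \<omega>) / m) * (\<Prod>z\<in>F. indicator (B z) (V z \<omega>)) \<partial>Q)"
      unfolding Q'_def using mpos Vm Bm mQF by (subst integral_density) auto
    also have "\<dots> = (\<integral>\<omega>. (\<Prod>z\<in>insert d F. indicator (B z) (V z \<omega>)) \<partial>Q) / m"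
      unfolding PiQ by simp
    finally have R: "(\<integral>\<omega>. (\<Prod>z\<in>F. indicator (B z) (V z \<omega>)) \<partial>Q') = (\<integral>\<omega>. (\<Prod>z\<in>insert d F. indicator (B z) (V z \<omega>)) \<partial>Q) / m" .
    show ?thesis using IH L R mpos by simp
  qed
qed


lemma emeasure_distr_rect:
  fixes U :: "'i \<Rightarrow> 'a \<Rightarrow> real"
  assumes P: "prob_space P" and S: "finite S" and U: "\<And>z. z \<in> S \<Longrightarrow> U z \<in> borel_measurable P"
    and B: "\<And>z. z \<in> S \<Longrightarrow> B z \<in> sets borel"
  shows "emeasure (distr P (PiM S (\<lambda>_. borel)) (\<lambda>\<omega>. \<lambda>z\<in>S. U z \<omega>)) (PiE S B)
     = ennreal (\<integral>\<omega>. (\<Prod>z\<in>S. indicator (B z) (U z \<omega>)) \<partial>P)"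
proof -
  interpret prob_space P by fact
  have m: "(\<lambda>\<omega>. \<lambda>z\<in>S. U z \<omega>) \<in> measurable P (PiM S (\<lambda>_. borel))"
    using U by (intro measurable_restrict) auto
  have sets: "PiE S B \<in> sets (PiM S (\<lambda>_. borel))"
    using B by (intro sets_PiM_I_finite S) auto
  have eqs: "(\<lambda>\<omega>. \<lambda>z\<in>S. U z \<omega>) -` PiE S B \<inter> space P = {\<omega>\<in>space P. \<forall>z\<in>S. U z \<omega> \<in> B z}"
    by (auto simp: PiE_def Pi_def)
  have "emeasure (distr P (PiM S (\<lambda>_. borel)) (\<lambda>\<omega>. \<lambda>z\<in>S. U z \<omega>)) (PiE S B)
      = emeasure P {\<omega>\<in>space P. \<forall>z\<in>S. U z \<omega> \<in> B z}"
    using m sets by (simp add: emeasure_distr eqs)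
  also have "\<dots> = ennreal (measure P {\<omega>\<in>space P. \<forall>z\<in>S. U z \<omega> \<in> B z})"
    by (simp add: emeasure_eq_measure)
  also have "measure P {\<omega>\<in>space P. \<forall>z\<in>S. U z \<omega> \<in> B z} = (\<integral>\<omega>. indicator {\<omega>\<in>space P. \<forall>z\<in>S. U z \<omega> \<in> B z} \<omega> \<partial>P)"
    by (simp add: Int_absorb2 Int_absorb1 Collect_subset)
  also have "\<dots> = (\<integral>\<omega>. (\<Prod>z\<in>S. indicator (B z) (U z \<omega>)) \<partial>P)"
    by (intro Bochner_Integration.integral_cong refl) (auto simp: indicator_def S)
  finally show ?thesis .
qed

lemma mv_distr_eq:
  fixes U :: "'i \<Rightarrow> 'a \<Rightarrow> real" and V :: "'i \<Rightarrow> 'b \<Rightarrow> real"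
  assumes S: "finite S" and P: "prob_space P" and Q: "prob_space Q"
    and U: "\<And>z. z \<in> S \<Longrightarrow> U z \<in> borel_measurable P" and V: "\<And>z. z \<in> S \<Longrightarrow> V z \<in> borel_measurable Q"
    and ch: "\<And>t. (CLINT \<omega>|P. iexp (\<Sum>z\<in>S. t z * U z \<omega>)) = (CLINT \<omega>|Q. iexp (\<Sum>z\<in>S. t z * V z \<omega>))"
  shows "distr P (PiM S (\<lambda>_. borel)) (\<lambda>\<omega>. \<lambda>z\<in>S. U z \<omega>) = distr Q (PiM S (\<lambda>_. borel)) (\<lambda>\<omega>. \<lambda>z\<in>S. V z \<omega>)"
proof (rule measure_eqI_PiM_finite[OF S])
  show "sets (distr P (PiM S (\<lambda>_. borel)) (\<lambda>\<omega>. \<lambda>z\<in>S. U z \<omega>)) = sets (PiM S (\<lambda>_. borel))" by simp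
  show "sets (distr Q (PiM S (\<lambda>_. borel)) (\<lambda>\<omega>. \<lambda>z\<in>S. V z \<omega>)) = sets (PiM S (\<lambda>_. borel))" by simp
  fix B :: "'i \<Rightarrow> real set" assume B: "\<And>i. i \<in> S \<Longrightarrow> B i \<in> sets borel"
  show "emeasure (distr P (PiM S (\<lambda>_. borel)) (\<lambda>\<omega>. \<lambda>z\<in>S. U z \<omega>)) (PiE S B)
      = emeasure (distr Q (PiM S (\<lambda>_. borel)) (\<lambda>\<omega>. \<lambda>z\<in>S. V z \<omega>)) (PiE S B)"
  proof -
    have "(\<integral>\<omega>. (\<Prod>z\<in>S. indicator (B z) (U z \<omega>)) \<partial>P) = (\<integral>\<omega>. (\<Prod>z\<in>S. indicator (B z) (V z \<omega>)) \<partial>Q :: real)"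
      by (rule mv_rect[OF S P Q]) (simp_all add: U V B ch[unfolded of_real_sum of_real_mult])
    moreover have "emeasure (distr P (PiM S (\<lambda>_. borel)) (\<lambda>\<omega>. \<lambda>z\<in>S. U z \<omega>)) (PiE S B)
     = ennreal (\<integral>\<omega>. (\<Prod>z\<in>S. indicator (B z) (U z \<omega>)) \<partial>P)"
      by (rule emeasure_distr_rect[OF P S]) (simp_all add: U B)
    moreover have "emeasure (distr Q (PiM S (\<lambda>_. borel)) (\<lambda>\<omega>. \<lambda>z\<in>S. V z \<omega>)) (PiE S B)
     = ennreal (\<integral>\<omega>. (\<Prod>z\<in>S. indicator (B z) (V z \<omega>)) \<partial>Q)"
      by (rule emeasure_distr_rect[OF Q S]) (simp_all add: V B)
    ultimately show ?thesis by simp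
  qed
next
  show "range (\<lambda>_::nat. space (PiM S (\<lambda>_. borel :: real measure))) \<subseteq> prod_algebra S (\<lambda>_. borel)"
    using prod_algebraI_finite[OF S, of "\<lambda>_. UNIV" "\<lambda>_. borel"] by (auto simp: space_PiM)
  show "(\<Union>i::nat. space (PiM S (\<lambda>_. borel :: real measure))) = space (PiM S (\<lambda>_. borel))" by simp
  fix i :: nat
  show "emeasure (distr P (PiM S (\<lambda>_. borel)) (\<lambda>\<omega>. \<lambda>z\<in>S. U z \<omega>)) (space (PiM S (\<lambda>_. borel))) \<noteq> \<infinity>"
  proof -
    interpret prob_space P by fact
    have "(\<lambda>\<omega>. \<lambda>z\<in>S. U z \<omega>) \<in> measurable P (PiM S (\<lambda>_. borel))"
      using U by (intro measurable_restrict) auto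
    then show ?thesis by (subst emeasure_distr) auto
  qed
qed


lemma adj_sym: "adj x y = adj y x"
  unfolding adj_def by (simp add: abs_minus_commute)

lemma kk_sym: "kill_kernel N x y = kill_kernel N y x"
  unfolding kill_kernel_def using adj_sym by auto

lemma kk_nonneg: "0 \<le> kill_kernel N x y"
  unfolding kill_kernel_def by auto

lemma kk_out1: "x \<notin> box_int N \<Longrightarrow> kill_kernel N x y = 0"
  and kk_out2: "y \<notin> box_int N \<Longrightarrow> kill_kernel N x y = 0"
  unfolding kill_kernel_def by auto

lemma finite_box_int[simp]: "finite (box_int N)"
  unfolding box_int_def by simp

lemma finite_box[simp]: "finite (box N)"
  unfolding box_def by simp

lemma box_int_sub: "box_int N \<subseteq> box N"
  unfolding box_int_def box_def by auto

lemma kill_pow_nonneg: "0 \<le> kill_pow N m x y"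
  by (induction m arbitrary: x) (auto intro!: sum_nonneg mult_nonneg_nonneg kk_nonneg)

lemma sum_delta_mult:
  "finite A \<Longrightarrow> (\<Sum>z\<in>A. (if x = z then 1 else 0) * f z) = (if x \<in> A then f x else (0::real))"
  "finite A \<Longrightarrow> (\<Sum>z\<in>A. f z * (if z = y then 1 else 0)) = (if y \<in> A then f y else (0::real))"
proof -
  assume A: "finite A"
  have "(\<Sum>z\<in>A. (if x = z then 1 else 0) * f z) = (\<Sum>z\<in>A. if x = z then f z else 0)"
    by (rule sum.cong) auto
  then show "(\<Sum>z\<in>A. (if x = z then 1 else 0) * f z) = (if x \<in> A then f x else (0::real))"
    using A by (simp add: sum.delta')
  have "(\<Sum>z\<in>A. f z * (if z = y then 1 else 0)) = (\<Sum>z\<in>A. if z = y then f z else 0)"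
    by (rule sum.cong) auto
  then show "(\<Sum>z\<in>A. f z * (if z = y then 1 else 0)) = (if y \<in> A then f y else (0::real))"
    using A by (simp add: sum.delta)
qed

lemma kill_pow_one: "kill_pow N (Suc 0) x y = kill_kernel N x y"
  using sum_delta_mult(2)[of "box_int N" "kill_kernel N x" y] by (simp add: kk_out2)

lemma kill_pow_right:
  "kill_pow N (Suc m) x y = (\<Sum>z\<in>box_int N. kill_pow N m x z * kill_kernel N z y)"
proof (induction m arbitrary: x)
  case 0
  then show ?case using sum_delta_mult(1)[of "box_int N" x "\<lambda>z. kill_kernel N z y"]
    by (simp only: kill_pow_one kill_pow.simps(1)) (simp add: kk_out1)
next
  case (Suc m)
  have "kill_pow N (Suc (Suc m)) x y = (\<Sum>z\<in>box_int N. kill_kernel N x z * (\<Sum>u\<in>box_int N. kill_pow N m z u * kill_kernel N u y))"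
    using Suc by simp
  also have "\<dots> = (\<Sum>u\<in>box_int N. (\<Sum>z\<in>box_int N. kill_kernel N x z * kill_pow N m z u) * kill_kernel N u y)"
  proof -
    have "(\<Sum>z\<in>box_int N. kill_kernel N x z * (\<Sum>u\<in>box_int N. kill_pow N m z u * kill_kernel N u y))
       = (\<Sum>z\<in>box_int N. \<Sum>u\<in>box_int N. kill_kernel N x z * kill_pow N m z u * kill_kernel N u y)"
      by (simp add: sum_distrib_left mult.assoc)
    also have "\<dots> = (\<Sum>u\<in>box_int N. \<Sum>z\<in>box_int N. kill_kernel N x z * kill_pow N m z u * kill_kernel N u y)"
      by (rule sum.swap)
    also have "\<dots> = (\<Sum>u\<in>box_int N. (\<Sum>z\<in>box_int N. kill_kernel N x z * kill_pow N m z u) * kill_kernel N u y)"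
      by (simp add: sum_distrib_right)
    finally show ?thesis .
  qed
  finally show ?case by simp
qed

lemma kill_pow_sym: "kill_pow N m x y = kill_pow N m y x"
proof (induction m arbitrary: x y)
  case 0 then show ?case by simp
next
  case (Suc m)
  have "kill_pow N (Suc m) x y = (\<Sum>z\<in>box_int N. kill_kernel N x z * kill_pow N m z y)" by simp
  also have "\<dots> = (\<Sum>z\<in>box_int N. kill_pow N m y z * kill_kernel N z x)"
    by (intro sum.cong refl) (metis Suc kk_sym mult.commute)
  also have "\<dots> = kill_pow N (Suc m) y x" by (simp only: kill_pow_right)
  finally show ?case .
qed

lemma green_sym: "green N x y = green N y x"
  unfolding green_def by (simp add: kill_pow_sym[of N _ x y] conj_commute)

definition pot :: "nat \<Rightarrow> site \<Rightarrow> real" where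
  "pot N x = 2 * (real N)^2 - (real_of_int (fst x))^2 - (real_of_int (snd x))^2"

lemma adj_iff: "adj x z \<longleftrightarrow> z \<in> {(fst x + 1, snd x), (fst x - 1, snd x), (fst x, snd x + 1), (fst x, snd x - 1)}"
proof -
  obtain a b where x: "x = (a, b)" by force
  obtain c d where z: "z = (c, d)" by force
  show ?thesis unfolding x z adj_def by auto
qed

lemma pot_nonneg: "z \<in> box N \<Longrightarrow> 0 \<le> pot N z"
proof -
  assume "z \<in> box N"
  then have a: "0 \<le> fst z" "fst z \<le> int N" "0 \<le> snd z" "snd z \<le> int N" unfolding box_def by auto
  have "(real_of_int (fst z))^2 \<le> (real N)^2"
    using a by (intro power_mono) auto
  moreover have "(real_of_int (snd z))^2 \<le> (real N)^2"
    using a by (intro power_mono) auto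
  ultimately show ?thesis unfolding pot_def by simp
qed

lemma pot_step:
  assumes x: "x \<in> box_int N"
  shows "(\<Sum>z\<in>box_int N. kill_kernel N x z * pot N z) \<le> pot N x - 1"
proof -
  obtain a b where xab: "x = (a, b)" by force
  let ?nb = "{(a + 1, b), (a - 1, b), (a, b + 1), (a, b - 1)}"
  have nbbox: "?nb \<subseteq> box N" using x unfolding xab box_int_def box_def by auto
  have "(\<Sum>z\<in>box_int N. kill_kernel N x z * pot N z) = (\<Sum>z\<in>box_int N \<inter> ?nb. pot N z / 4)"
    unfolding kill_kernel_def using x
    by (auto simp: sum.inter_restrict adj_iff xab intro!: sum.cong)
  also have "\<dots> \<le> (\<Sum>z\<in>?nb. pot N z / 4)"
    using nbbox pot_nonneg by (intro sum_mono2) auto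
  also have "\<dots> = pot N x - 1"
    unfolding xab pot_def by (simp add: power2_eq_square) (simp add: field_simps)
  finally show ?thesis .
qed


lemma pot_descent:
  assumes x: "x \<in> box_int N"
  shows "(\<Sum>y\<in>box_int N. kill_pow N n x y * pot N y) + (\<Sum>m<n. \<Sum>y\<in>box_int N. kill_pow N m x y) \<le> pot N x"
proof (induction n)
  case 0
  show ?case using sum_delta_mult(1)[of "box_int N" x "pot N"] x by simp
next
  case (Suc n)
  have "(\<Sum>y\<in>box_int N. kill_pow N (Suc n) x y * pot N y)
     = (\<Sum>y\<in>box_int N. \<Sum>z\<in>box_int N. kill_pow N n x z * (kill_kernel N z y * pot N y))"
    unfolding kill_pow_right by (simp add: sum_distrib_right mult.assoc)
  also have "\<dots> = (\<Sum>z\<in>box_int N. kill_pow N n x z * (\<Sum>y\<in>box_int N. kill_kernel N z y * pot N y))"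
    by (subst sum.swap) (simp add: sum_distrib_left)
  also have "\<dots> \<le> (\<Sum>z\<in>box_int N. kill_pow N n x z * (pot N z - 1))"
    by (intro sum_mono mult_left_mono pot_step kill_pow_nonneg)
  also have "\<dots> = (\<Sum>y\<in>box_int N. kill_pow N n x y * pot N y) - (\<Sum>y\<in>box_int N. kill_pow N n x y)"
    by (simp add: algebra_simps sum_subtractf)
  finally show ?case using Suc by simp
qed

lemma kill_pow_summable:
  assumes x: "x \<in> box_int N" and y: "y \<in> box_int N"
  shows "summable (\<lambda>m. kill_pow N m x y)"
proof (rule summableI_nonneg_bounded)
  fix n
  have "(\<Sum>m<n. kill_pow N m x y) \<le> (\<Sum>m<n. \<Sum>y\<in>box_int N. kill_pow N m x y)"
    using y by (intro sum_mono member_le_sum kill_pow_nonneg) auto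
  also have "\<dots> \<le> pot N x"
  proof -
    have "0 \<le> (\<Sum>y\<in>box_int N. kill_pow N n x y * pot N y)"
      using box_int_sub by (intro sum_nonneg mult_nonneg_nonneg kill_pow_nonneg pot_nonneg) auto
    then show ?thesis using pot_descent[OF x, of n] by simp
  qed
  finally show "(\<Sum>m<n. kill_pow N m x y) \<le> pot N x" .
qed (rule kill_pow_nonneg)

lemma green_resolvent:
  "green N x y = (if x = y \<and> y \<in> box_int N then 1 else 0) + (\<Sum>z\<in>box_int N. kill_kernel N x z * green N z y)"
proof (cases "x \<in> box_int N \<and> y \<in> box_int N")
  case False
  then show ?thesis
    by (auto simp: green_def kk_out1 intro!: sum.neutral)
next
  case True
  then have x: "x \<in> box_int N" and y: "y \<in> box_int N" by auto
  have "green N x y = (\<Sum>m. kill_pow N m x y)" using x y by (simp add: green_def)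
  also have "\<dots> = kill_pow N 0 x y + (\<Sum>m. kill_pow N (Suc m) x y)"
    using suminf_split_head[OF kill_pow_summable[OF x y]] by simp
  also have "(\<Sum>m. kill_pow N (Suc m) x y) = (\<Sum>m. \<Sum>z\<in>box_int N. kill_kernel N x z * kill_pow N m z y)"
    by simp
  also have "\<dots> = (\<Sum>z\<in>box_int N. \<Sum>m. kill_kernel N x z * kill_pow N m z y)"
    using kill_pow_summable[OF _ y] by (intro suminf_sum summable_mult) auto
  also have "\<dots> = (\<Sum>z\<in>box_int N. kill_kernel N x z * green N z y)"
    using kill_pow_summable[OF _ y] y
    by (intro sum.cong refl) (simp add: green_def suminf_mult)
  finally show ?thesis using x y by simp
qed

lemma green_resolvent_right:
  "green N x y = (if x = y \<and> y \<in> box_int N then 1 else 0) + (\<Sum>z\<in>box_int N. green N x z * kill_kernel N z y)"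
  using green_resolvent[of N y x] by (auto simp: green_sym[of N _ x] green_sym[of N y x] kk_sym mult.commute)


lemma sum_split_D:
  fixes f :: "'a \<Rightarrow> real"
  assumes "finite D" "D' \<subseteq> D"
  shows "(\<Sum>z\<in>D. f z) = (\<Sum>z\<in>D'. f z) + (\<Sum>z\<in>D - D'. f z)"
  using assms by (metis add.commute sum.subset_diff)

lemma delta_sum_left:
  fixes f :: "'a \<Rightarrow> real"
  shows "finite A \<Longrightarrow> y \<in> A \<Longrightarrow> (\<Sum>a\<in>A. f a * (if a = y then 1 else 0)) = f y"
  by (simp add: if_distrib[of "\<lambda>c. f _ * c"] sum.delta cong: if_cong)

lemma schur:
  fixes G G' K :: "'a \<Rightarrow> 'a \<Rightarrow> real"
  assumes fin: "finite D" and sub: "D' \<subseteq> D"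
    and R1: "\<And>x y. x \<in> D' \<Longrightarrow> y \<in> D' \<Longrightarrow> G x y = (if x = y then 1 else 0) + (\<Sum>z\<in>D. K x z * G z y)"
    and R2: "\<And>w y. w \<in> D - D' \<Longrightarrow> y \<in> D' \<Longrightarrow> G w y = (\<Sum>z\<in>D. G w z * K z y)"
    and R1': "\<And>x y. x \<in> D' \<Longrightarrow> y \<in> D' \<Longrightarrow> G' x y = (if x = y then 1 else 0) + (\<Sum>z\<in>D'. K x z * G' z y)"
    and R2': "\<And>x y. x \<in> D' \<Longrightarrow> y \<in> D' \<Longrightarrow> G' x y = (if x = y then 1 else 0) + (\<Sum>z\<in>D'. G' x z * K z y)"
    and x: "x \<in> D'" and y: "y \<in> D'"
  shows "G x y = G' x y + (\<Sum>w\<in>D - D'. \<Sum>w'\<in>D - D'.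
            (\<Sum>a\<in>D'. G' x a * K a w) * G w w' * (\<Sum>b\<in>D'. K w' b * G' b y))"
proof -
  let ?S = "D - D'"
  have finD': "finite D'" using fin sub finite_subset by auto
  have finS: "finite ?S" using fin by auto
  define F where "F x w = (\<Sum>a\<in>D'. G' x a * K a w)" for x w
  define F' where "F' w' y = (\<Sum>b\<in>D'. K w' b * G' b y)" for w' y
  have E1: "G x y = G' x y + (\<Sum>w\<in>?S. F x w * G w y)" if x: "x \<in> D'" and y: "y \<in> D'" for x y
  proof -
    define T where "T = (\<Sum>a\<in>D'. G' x a * G a y)"
    have "T = (\<Sum>a\<in>D'. G' x a * ((if a = y then 1 else 0) + (\<Sum>z\<in>D'. K a z * G z y) + (\<Sum>w\<in>?S. K a w * G w y)))"
      unfolding T_def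
      by (intro sum.cong refl) (simp add: R1 y sum_split_D[OF fin sub] add.assoc)
    also have "\<dots> = (\<Sum>a\<in>D'. G' x a * (if a = y then 1 else 0)) + (\<Sum>a\<in>D'. \<Sum>z\<in>D'. G' x a * K a z * G z y)
        + (\<Sum>a\<in>D'. \<Sum>w\<in>?S. G' x a * K a w * G w y)"
      by (simp add: distrib_left sum.distrib sum_distrib_left mult.assoc)
    also have "(\<Sum>a\<in>D'. G' x a * (if a = y then 1 else 0)) = G' x y"
      using finD' y by (rule delta_sum_left)
    also have "(\<Sum>a\<in>D'. \<Sum>z\<in>D'. G' x a * K a z * G z y) = (\<Sum>z\<in>D'. (\<Sum>a\<in>D'. G' x a * K a z) * G z y)"
      by (subst sum.swap) (simp add: sum_distrib_right)
    also have "\<dots> = (\<Sum>z\<in>D'. (G' x z - (if x = z then 1 else 0)) * G z y)"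
      by (intro sum.cong refl) (simp add: R2'[OF x])
    also have "\<dots> = T - G x y"
      unfolding T_def using finD' x by (simp add: left_diff_distrib sum_subtractf if_distrib[of "\<lambda>c. c * _"] sum.delta' cong: if_cong)
    also have "(\<Sum>a\<in>D'. \<Sum>w\<in>?S. G' x a * K a w * G w y) = (\<Sum>w\<in>?S. F x w * G w y)"
      unfolding F_def by (subst sum.swap) (simp add: sum_distrib_right)
    finally show ?thesis by simp
  qed
  have E2: "G w y = (\<Sum>w'\<in>?S. G w w' * F' w' y)" if w: "w \<in> ?S" and y: "y \<in> D'" for w y
  proof -
    define U where "U = (\<Sum>b\<in>D'. G w b * G' b y)"
    have "U = (\<Sum>b\<in>D'. G w b * ((if b = y then 1 else 0) + (\<Sum>z\<in>D'. K b z * G' z y)))"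
      unfolding U_def by (intro sum.cong refl) (simp add: R1' y)
    also have "\<dots> = (\<Sum>b\<in>D'. G w b * (if b = y then 1 else 0)) + (\<Sum>b\<in>D'. \<Sum>z\<in>D'. G w b * K b z * G' z y)"
      by (simp add: distrib_left sum.distrib sum_distrib_left mult.assoc)
    also have "(\<Sum>b\<in>D'. G w b * (if b = y then 1 else 0)) = G w y"
      using finD' y by (rule delta_sum_left)
    also have "(\<Sum>b\<in>D'. \<Sum>z\<in>D'. G w b * K b z * G' z y) = (\<Sum>z\<in>D'. (\<Sum>b\<in>D'. G w b * K b z) * G' z y)"
      by (subst sum.swap) (simp add: sum_distrib_right)
    also have "\<dots> = (\<Sum>z\<in>D'. (G w z - (\<Sum>w'\<in>?S. G w w' * K w' z)) * G' z y)"
      by (intro sum.cong refl) (simp add: R2[OF w] sum_split_D[OF fin sub])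
    also have "\<dots> = U - (\<Sum>w'\<in>?S. G w w' * F' w' y)"
      unfolding U_def F'_def
      by (simp add: left_diff_distrib sum_subtractf sum_distrib_right sum_distrib_left mult.assoc sum.swap[of _ ?S D'])
    finally show ?thesis by simp
  qed
  have "G x y = G' x y + (\<Sum>w\<in>?S. F x w * (\<Sum>w'\<in>?S. G w w' * F' w' y))"
    using E1[OF x y] E2[OF _ y] by simp
  also have "\<dots> = G' x y + (\<Sum>w\<in>?S. \<Sum>w'\<in>?S. F x w * G w w' * F' w' y)"
    by (simp add: sum_distrib_left mult.assoc)
  finally show ?thesis unfolding F_def F'_def .
qed


definition shN :: "nat \<Rightarrow> site \<Rightarrow> site" where "shN N z = (fst z - int N, snd z)"
definition unsh :: "nat \<Rightarrow> site \<Rightarrow> site" where "unsh N z = (fst z + int N, snd z)"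
definition DB :: "nat \<Rightarrow> site set" where "DB N = unsh N ` box_int N"
definition Dp :: "nat \<Rightarrow> site set" where "Dp N = box_int N \<union> DB N"
definition Gp :: "nat \<Rightarrow> site \<Rightarrow> site \<Rightarrow> real" where
  "Gp N x y = green N x y + green N (shN N x) (shN N y)"

lemma sh_unsh[simp]: "shN N (unsh N z) = z" "unsh N (shN N z) = z"
  by (auto simp: shN_def unsh_def)

lemma inj_unsh: "inj (unsh N)"
  by (metis injI sh_unsh(1))

lemma DB_iff: "x \<in> DB N \<longleftrightarrow> shN N x \<in> box_int N"
  unfolding DB_def by (metis image_iff sh_unsh)

lemma finite_DB[simp]: "finite (DB N)" and finite_Dp[simp]: "finite (Dp N)"
  by (auto simp: DB_def Dp_def)

lemma A_not_B: "x \<in> box_int N \<Longrightarrow> x \<notin> DB N"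
  and A_sh: "x \<in> box_int N \<Longrightarrow> shN N x \<notin> box_int N"
  and B_not_A: "x \<in> DB N \<Longrightarrow> x \<notin> box_int N"
  by (auto simp: DB_iff box_int_def shN_def)

lemma Dp_sub: "Dp N \<subseteq> box_int (2 * N)"
  by (auto simp: Dp_def DB_iff box_int_def shN_def)

lemma kA: "x \<in> box_int N \<Longrightarrow> z \<in> box_int N \<Longrightarrow> kill_kernel (2 * N) x z = kill_kernel N x z"
  using Dp_sub[of N] by (auto simp: kill_kernel_def Dp_def)

lemma kB: "x \<in> DB N \<Longrightarrow> z \<in> DB N \<Longrightarrow> kill_kernel (2 * N) x z = kill_kernel N (shN N x) (shN N z)"
  using Dp_sub[of N] by (auto simp: kill_kernel_def Dp_def DB_iff adj_def shN_def)

lemma kAB: "x \<in> box_int N \<Longrightarrow> z \<in> DB N \<Longrightarrow> kill_kernel (2 * N) x z = 0"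
  by (auto simp: kill_kernel_def DB_iff adj_def shN_def box_int_def)

lemma kBA: "x \<in> DB N \<Longrightarrow> z \<in> box_int N \<Longrightarrow> kill_kernel (2 * N) x z = 0"
  using kAB kk_sym by metis

lemma sum_Dp:
  fixes f :: "site \<Rightarrow> real"
  shows "(\<Sum>z\<in>Dp N. f z) = (\<Sum>z\<in>box_int N. f z) + (\<Sum>z\<in>DB N. f z)"
  unfolding Dp_def by (rule sum.union_disjoint) (auto dest: A_not_B)

lemma sum_DB:
  fixes f :: "site \<Rightarrow> real"
  shows "(\<Sum>z\<in>DB N. f z) = (\<Sum>u\<in>box_int N. f (unsh N u))"
  unfolding DB_def by (rule sum.reindex_cong[OF _ refl refl]) (meson inj_unsh inj_on_subset subset_UNIV)

lemma L1:
  assumes x: "x \<in> Dp N"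
  shows "(\<Sum>z\<in>Dp N. kill_kernel (2 * N) x z * green N z y) = (\<Sum>z\<in>box_int N. kill_kernel N x z * green N z y)"
proof -
  have "(\<Sum>z\<in>DB N. kill_kernel (2 * N) x z * green N z y) = 0"
    by (intro sum.neutral) (auto simp: green_def dest: B_not_A)
  moreover have "(\<Sum>z\<in>box_int N. kill_kernel (2 * N) x z * green N z y) = (\<Sum>z\<in>box_int N. kill_kernel N x z * green N z y)"
  proof (cases "x \<in> box_int N")
    case True then show ?thesis by (intro sum.cong refl) (simp add: kA)
  next
    case False
    then have "x \<in> DB N" using x by (auto simp: Dp_def)
    then show ?thesis using False by (intro sum.cong refl) (simp add: kBA kk_out1)
  qed
  ultimately show ?thesis by (simp add: sum_Dp)
qed

lemma L2:
  assumes x: "x \<in> Dp N"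
  shows "(\<Sum>z\<in>Dp N. kill_kernel (2 * N) x z * green N (shN N z) (shN N y))
       = (\<Sum>u\<in>box_int N. kill_kernel N (shN N x) u * green N u (shN N y))"
proof -
  have "(\<Sum>z\<in>box_int N. kill_kernel (2 * N) x z * green N (shN N z) (shN N y)) = 0"
    by (intro sum.neutral) (auto simp: green_def dest: A_sh)
  moreover have "(\<Sum>z\<in>DB N. kill_kernel (2 * N) x z * green N (shN N z) (shN N y))
      = (\<Sum>u\<in>box_int N. kill_kernel N (shN N x) u * green N u (shN N y))"
    unfolding sum_DB
  proof (cases "x \<in> DB N")
    case True then show "(\<Sum>u\<in>box_int N. kill_kernel (2 * N) x (unsh N u) * green N (shN N (unsh N u)) (shN N y))
      = (\<Sum>u\<in>box_int N. kill_kernel N (shN N x) u * green N u (shN N y))"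
      by (intro sum.cong refl) (simp add: kB DB_iff)
  next
    case False
    then have xA: "x \<in> box_int N" using x by (auto simp: Dp_def)
    then show "(\<Sum>u\<in>box_int N. kill_kernel (2 * N) x (unsh N u) * green N (shN N (unsh N u)) (shN N y))
      = (\<Sum>u\<in>box_int N. kill_kernel N (shN N x) u * green N u (shN N y))"
      by (intro sum.cong refl) (simp add: kAB DB_iff kk_out1 A_sh)
  qed
  ultimately show ?thesis by (simp add: sum_Dp)
qed

lemma Gp_sym: "Gp N x y = Gp N y x"
  unfolding Gp_def using green_sym by metis

lemma delta_Dp:
  assumes "x \<in> Dp N" "y \<in> Dp N"
  shows "(if x = y \<and> y \<in> box_int N then 1 else 0) + (if shN N x = shN N y \<and> shN N y \<in> box_int N then 1 else 0)
      = (if x = y then 1 else (0::real))"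
  using assms by (auto simp: Dp_def DB_iff dest: A_sh) (metis sh_unsh(2))

lemma Gp_left:
  assumes x: "x \<in> Dp N" and y: "y \<in> Dp N"
  shows "Gp N x y = (if x = y then 1 else 0) + (\<Sum>z\<in>Dp N. kill_kernel (2 * N) x z * Gp N z y)"
proof -
  have "(\<Sum>z\<in>Dp N. kill_kernel (2 * N) x z * Gp N z y)
     = (\<Sum>z\<in>Dp N. kill_kernel (2 * N) x z * green N z y) + (\<Sum>z\<in>Dp N. kill_kernel (2 * N) x z * green N (shN N z) (shN N y))"
    unfolding Gp_def by (simp add: distrib_left sum.distrib)
  also have "\<dots> = (green N x y - (if x = y \<and> y \<in> box_int N then 1 else 0))
       + (green N (shN N x) (shN N y) - (if shN N x = shN N y \<and> shN N y \<in> box_int N then 1 else 0))"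
    unfolding L1[OF x] L2[OF x]
    using green_resolvent[of N x y] green_resolvent[of N "shN N x" "shN N y"] by simp
  finally show ?thesis using delta_Dp[OF x y] unfolding Gp_def by simp
qed

lemma Gp_right:
  assumes x: "x \<in> Dp N" and y: "y \<in> Dp N"
  shows "Gp N x y = (if x = y then 1 else 0) + (\<Sum>z\<in>Dp N. Gp N x z * kill_kernel (2 * N) z y)"
  using Gp_left[OF y x] by (auto simp: Gp_sym[of N _ x] Gp_sym[of N y x] kk_sym[of _ _ y] mult.commute)

lemma green_decomp:
  assumes x: "x \<in> Dp N" and y: "y \<in> Dp N"
  shows "green (2 * N) x y = Gp N x y + (\<Sum>w\<in>box_int (2 * N) - Dp N. \<Sum>w'\<in>box_int (2 * N) - Dp N.
      (\<Sum>a\<in>Dp N. Gp N x a * kill_kernel (2 * N) a w) * green (2 * N) w w' * (\<Sum>a\<in>Dp N. Gp N y a * kill_kernel (2 * N) a w'))"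
proof -
  have "green (2 * N) x y = Gp N x y + (\<Sum>w\<in>box_int (2 * N) - Dp N. \<Sum>w'\<in>box_int (2 * N) - Dp N.
      (\<Sum>a\<in>Dp N. Gp N x a * kill_kernel (2 * N) a w) * green (2 * N) w w' * (\<Sum>b\<in>Dp N. kill_kernel (2 * N) w' b * Gp N b y))"
  proof (rule schur[OF finite_box_int Dp_sub _ _ Gp_left Gp_right x y])
    show "green (2 * N) x y = (if x = y then 1 else 0) + (\<Sum>z\<in>box_int (2 * N). kill_kernel (2 * N) x z * green (2 * N) z y)"
      if "x \<in> Dp N" "y \<in> Dp N" for x y
      using green_resolvent[of "2 * N" x y] that Dp_sub by auto
    show "green (2 * N) w y = (\<Sum>z\<in>box_int (2 * N). green (2 * N) w z * kill_kernel (2 * N) z y)"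
      if "w \<in> box_int (2 * N) - Dp N" "y \<in> Dp N" for w y
      using green_resolvent_right[of "2 * N" w y] that by auto
  qed
  also have "(\<lambda>w'. \<Sum>b\<in>Dp N. kill_kernel (2 * N) w' b * Gp N b y) = (\<lambda>w'. \<Sum>a\<in>Dp N. Gp N y a * kill_kernel (2 * N) a w')"
    by (intro ext sum.cong refl) (metis Gp_sym kk_sym mult.commute)
  finally show ?thesis .
qed


lemma cgf_prob: "centered_gaussian_field M V X K \<Longrightarrow> prob_space M"
  and cgf_meas: "centered_gaussian_field M V X K \<Longrightarrow> z \<in> V \<Longrightarrow> X z \<in> borel_measurable M"
  unfolding centered_gaussian_field_def by auto

lemma cgf_sub:
  assumes c: "centered_gaussian_field M V X K" and fin: "finite V" and sub: "V' \<subseteq> V"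
  shows "(CLINT \<omega>|M. iexp (\<Sum>z\<in>V'. t z * X z \<omega>))
     = complex_of_real (exp (- (\<Sum>x\<in>V'. \<Sum>y\<in>V'. t x * t y * K x y) / 2))"
proof -
  define t' where "t' z = (if z \<in> V' then t z else 0)" for z
  have ch: "(CLINT \<omega>|M. iexp (\<Sum>z\<in>V. t' z * X z \<omega>))
     = complex_of_real (exp (- (\<Sum>x\<in>V. \<Sum>y\<in>V. t' x * t' y * K x y) / 2))"
    using c unfolding centered_gaussian_field_def by blast
  have e1: "(\<Sum>z\<in>V. t' z * X z \<omega>) = (\<Sum>z\<in>V'. t z * X z \<omega>)" for \<omega>
    using fin sub by (intro sum.mono_neutral_cong_right) (auto simp: t'_def)
  have e2: "(\<Sum>y\<in>V. t' x * t' y * K x y) = (\<Sum>y\<in>V'. t' x * t y * K x y)" for x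
    using fin sub by (intro sum.mono_neutral_cong_right) (auto simp: t'_def)
  have e3: "(\<Sum>x\<in>V. \<Sum>y\<in>V'. t' x * t y * K x y) = (\<Sum>x\<in>V'. \<Sum>y\<in>V'. t x * t y * K x y)"
    using fin sub by (intro sum.mono_neutral_cong_right) (auto simp: t'_def intro: finite_subset)
  show ?thesis using ch unfolding e1 e2 e3 .
qed

lemma cgf_coord:
  assumes c: "centered_gaussian_field M V X K" and fin: "finite V" and z: "z \<in> V"
  shows "(CLINT \<omega>|M. iexp (t * X z \<omega>)) = complex_of_real (exp (- (t * t * K z z) / 2))"
  using cgf_sub[OF c fin, of "{z}" "\<lambda>_. t"] z by simp

lemma cgf_diag_nonneg:
  assumes c: "centered_gaussian_field M V X K" and fin: "finite V" and z: "z \<in> V"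
  shows "0 \<le> K z z"
proof (rule ccontr)
  assume "\<not> 0 \<le> K z z"
  then have "1 < exp (- (1 * 1 * K z z) / 2)" by simp
  also have "\<dots> = norm (CLINT \<omega>|M. iexp (1 * X z \<omega>))"
    using cgf_coord[OF c fin z, of 1] by simp
  also have "\<dots> \<le> (\<integral>\<omega>. norm (iexp (1 * X z \<omega>)) \<partial>M)"
    by (rule integral_norm_bound)
  also have "\<dots> = 1"
    using cgf_prob[OF c] by (simp add: norm_exp_i_times prob_space.prob_space)
  finally show False by simp
qed

lemma cgf_coord_props:
  assumes c: "centered_gaussian_field M V X K" and fin: "finite V" and z: "z \<in> V"
  shows "integrable M (X z)" "integral\<^sup>L M (X z) = 0" "K z z = 0 \<Longrightarrow> AE \<omega> in M. X z \<omega> = 0"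
  using gauss1d[OF cgf_prob[OF c] cgf_meas[OF c z] cgf_diag_nonneg[OF c fin z] cgf_coord[OF c fin z]]
  by auto


lemma int_fst:
  fixes f :: "'a \<Rightarrow> real"
  assumes P: "prob_space P" and Q: "prob_space Q" and f: "integrable P f"
  shows "integrable (P \<Otimes>\<^sub>M Q) (\<lambda>q. f (fst q))" "(\<integral>q. f (fst q) \<partial>(P \<Otimes>\<^sub>M Q)) = integral\<^sup>L P f"
proof -
  interpret pair_prob_space P Q using P Q by (auto simp: pair_prob_space_def pair_sigma_finite_def prob_space_imp_sigma_finite)
  have fm[measurable]: "f \<in> borel_measurable P" using f by auto
  show I: "integrable (P \<Otimes>\<^sub>M Q) (\<lambda>q. f (fst q))"
    by (rule Fubini_integrable) (use f in \<open>auto simp: prob_space_axioms Q\<close>)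
  have "(\<integral>q. f (fst q) \<partial>(P \<Otimes>\<^sub>M Q)) = (\<integral>x. (\<integral>y. f (fst (x, y)) \<partial>Q) \<partial>P)"
    using integral_fst'[OF I] by simp
  also have "\<dots> = integral\<^sup>L P f" by (simp add: M2.prob_space)
  finally show "(\<integral>q. f (fst q) \<partial>(P \<Otimes>\<^sub>M Q)) = integral\<^sup>L P f" .
qed

lemma int_snd:
  fixes f :: "'b \<Rightarrow> real"
  assumes P: "prob_space P" and Q: "prob_space Q" and f: "integrable Q f"
  shows "integrable (P \<Otimes>\<^sub>M Q) (\<lambda>q. f (snd q))" "(\<integral>q. f (snd q) \<partial>(P \<Otimes>\<^sub>M Q)) = integral\<^sup>L Q f"
proof -
  interpret pair_prob_space P Q using P Q by (auto simp: pair_prob_space_def pair_sigma_finite_def prob_space_imp_sigma_finite)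
  have fm[measurable]: "f \<in> borel_measurable Q" using f by auto
  show I: "integrable (P \<Otimes>\<^sub>M Q) (\<lambda>q. f (snd q))"
    by (rule Fubini_integrable) (use f in \<open>auto simp: Q\<close>)
  have "(\<integral>q. f (snd q) \<partial>(P \<Otimes>\<^sub>M Q)) = (\<integral>x. (\<integral>y. f (snd (x, y)) \<partial>Q) \<partial>P)"
    using integral_fst'[OF I] by simp
  also have "\<dots> = integral\<^sup>L Q f" by (simp add: M1.prob_space)
  finally show "(\<integral>q. f (snd q) \<partial>(P \<Otimes>\<^sub>M Q)) = integral\<^sup>L Q f" .
qed

lemma pair_char:
  assumes P: "prob_space P" and Q: "prob_space Q" and f[measurable]: "f \<in> borel_measurable P" and g[measurable]: "g \<in> borel_measurable Q"
  shows "(CLINT q|P \<Otimes>\<^sub>M Q. iexp (f (fst q) + g (snd q))) = (CLINT x|P. iexp (f x)) * (CLINT y|Q. iexp (g y))"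
proof -
  interpret pair_prob_space P Q using P Q by (auto simp: pair_prob_space_def pair_sigma_finite_def prob_space_imp_sigma_finite)
  interpret PQ: prob_space "P \<Otimes>\<^sub>M Q" by (intro prob_space_pair P Q)
  have I: "integrable (P \<Otimes>\<^sub>M Q) (\<lambda>q. iexp (f (fst q) + g (snd q)))"
    by (rule P.integrable_iexp_real) measurable
  have "(CLINT q|P \<Otimes>\<^sub>M Q. iexp (f (fst q) + g (snd q))) = (CLINT x|P. (CLINT y|Q. iexp (f (fst (x,y)) + g (snd (x,y)))))"
    using integral_fst'[OF I] by simp
  also have "\<dots> = (CLINT x|P. iexp (f x) * (CLINT y|Q. iexp (g y)))"
  proof (intro Bochner_Integration.integral_cong refl)
    fix x
    have "(CLINT y|Q. iexp (f x + g y)) = (CLINT y|Q. iexp (f x) * iexp (g y))"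
      by (simp only: iexp_add)
    also have "\<dots> = iexp (f x) * (CLINT y|Q. iexp (g y))"
      by (rule integral_mult_right_zero)
    finally show "(CLINT y|Q. iexp (f (fst (x, y)) + g (snd (x, y)))) = iexp (f x) * (CLINT y|Q. iexp (g y))"
      by simp
  qed
  also have "\<dots> = (CLINT x|P. iexp (f x)) * (CLINT y|Q. iexp (g y))"
    by (rule integral_mult_left_zero)
  finally show ?thesis .
qed

lemma tail_lemma:
  fixes Y :: "'a \<Rightarrow> real"
  assumes P: "prob_space P" and Y: "integrable P Y"
    and H: "(\<integral>q. max (Y (fst q)) (Y (snd q)) \<partial>(P \<Otimes>\<^sub>M P)) \<le> integral\<^sup>L P Y + C"
  shows "(\<integral>\<omega>. \<bar>Y \<omega> - integral\<^sup>L P Y\<bar> \<partial>P) \<le> 2 * C"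
proof -
  interpret pair_prob_space P P using P by (auto simp: pair_prob_space_def pair_sigma_finite_def prob_space_imp_sigma_finite)
  interpret PP: prob_space "P \<Otimes>\<^sub>M P" by (intro prob_space_pair P)
  note F = int_fst[OF P P Y] and S = int_snd[OF P P Y]
  have Im: "Y \<in> borel_measurable P" using Y by auto
  have ID: "integrable (P \<Otimes>\<^sub>M P) (\<lambda>q. \<bar>Y (fst q) - Y (snd q)\<bar>)"
    using F S by auto
  have "(\<integral>q. max (Y (fst q)) (Y (snd q)) \<partial>(P \<Otimes>\<^sub>M P))
      = (\<integral>q. (Y (fst q) + Y (snd q) + \<bar>Y (fst q) - Y (snd q)\<bar>) / 2 \<partial>(P \<Otimes>\<^sub>M P))"
    by (intro Bochner_Integration.integral_cong refl) (simp add: max_def)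
  also have "\<dots> = (integral\<^sup>L P Y + integral\<^sup>L P Y + (\<integral>q. \<bar>Y (fst q) - Y (snd q)\<bar> \<partial>(P \<Otimes>\<^sub>M P))) / 2"
    using F S ID by (simp add: integral_add)
  finally have D: "(\<integral>q. \<bar>Y (fst q) - Y (snd q)\<bar> \<partial>(P \<Otimes>\<^sub>M P)) \<le> 2 * C" using H by simp
  have "(\<integral>\<omega>. \<bar>Y \<omega> - integral\<^sup>L P Y\<bar> \<partial>P) \<le> (\<integral>x. (\<integral>y. \<bar>Y (fst (x,y)) - Y (snd (x,y))\<bar> \<partial>P) \<partial>P)"
  proof (rule integral_mono)
    show "integrable P (\<lambda>\<omega>. \<bar>Y \<omega> - integral\<^sup>L P Y\<bar>)" using Y by auto
    show "integrable P (\<lambda>x. \<integral>y. \<bar>Y (fst (x, y)) - Y (snd (x, y))\<bar> \<partial>P)"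
      using integrable_fst'[OF ID] by simp
    fix x assume "x \<in> space P"
    have "\<bar>Y x - integral\<^sup>L P Y\<bar> = \<bar>\<integral>y. Y x - Y y \<partial>P\<bar>"
      using Y by (simp add: M1.prob_space)
    also have "\<dots> \<le> (\<integral>y. \<bar>Y x - Y y\<bar> \<partial>P)"
      by (rule integral_abs_bound)
    finally show "\<bar>Y x - integral\<^sup>L P Y\<bar> \<le> (\<integral>y. \<bar>Y (fst (x, y)) - Y (snd (x, y))\<bar> \<partial>P)" by simp
  qed
  also have "\<dots> = (\<integral>q. \<bar>Y (fst q) - Y (snd q)\<bar> \<partial>(P \<Otimes>\<^sub>M P))"
    using integral_fst'[OF ID] by simp
  finally show ?thesis using D by simp
qed

lemma tight_from_bound:
  fixes Y :: "nat \<Rightarrow> 'a \<Rightarrow> real"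
  assumes P: "\<And>n. prob_space (P n)" and Y: "\<And>n. integrable (P n) (Y n)"
    and B: "\<And>n. (\<integral>\<omega>. \<bar>Y n \<omega> - integral\<^sup>L (P n) (Y n)\<bar> \<partial>P n) \<le> B"
  shows "tight (\<lambda>n. distr (P n) borel (\<lambda>\<omega>. Y n \<omega> - integral\<^sup>L (P n) (Y n)))"
  unfolding tight_def
proof (intro conjI allI impI)
  fix n
  interpret prob_space "P n" by fact
  show "real_distribution (distr (P n) borel (\<lambda>\<omega>. Y n \<omega> - integral\<^sup>L (P n) (Y n)))"
    using Y[of n] by (intro real_distribution_distr) auto
next
  fix \<epsilon> :: real assume e: "\<epsilon> > 0"
  have B0: "0 \<le> B" using B[of 0] by (smt (verit) Bochner_Integration.integral_nonneg abs_ge_zero)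
  define a where "a = B / \<epsilon> + 1"
  have a0: "a > 0" unfolding a_def using B0 e by (simp add: add_nonneg_pos)
  have Ba: "B / a < \<epsilon>"
    using B0 e a0 unfolding a_def by (simp add: field_simps)
  show "\<exists>a b. a < b \<and> (\<forall>n. 1 - \<epsilon> < measure (distr (P n) borel (\<lambda>\<omega>. Y n \<omega> - integral\<^sup>L (P n) (Y n))) {a<..b})"
  proof (intro exI conjI allI)
    show "-a < a" using a0 by simp
    fix n
    interpret prob_space "P n" by fact
    define Z where "Z \<omega> = Y n \<omega> - integral\<^sup>L (P n) (Y n)" for \<omega>
    have Zm[measurable]: "Z \<in> borel_measurable (P n)" unfolding Z_def using Y[of n] by auto
    have iZ: "integrable (P n) (\<lambda>\<omega>. \<bar>Z \<omega>\<bar>)" unfolding Z_def using Y[of n] by auto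
    have "prob {\<omega>\<in>space (P n). a \<le> \<bar>Z \<omega>\<bar>} \<le> (\<integral>\<omega>. \<bar>Z \<omega>\<bar> \<partial>P n) / a"
      by (rule integral_Markov_inequality_measure[OF iZ]) (use a0 in auto)
    also have "\<dots> \<le> B / a" using B[of n] a0 unfolding Z_def by (simp add: divide_right_mono)
    finally have m1: "prob {\<omega>\<in>space (P n). a \<le> \<bar>Z \<omega>\<bar>} < \<epsilon>" using Ba by simp
    have c1: "prob (space (P n) - {\<omega>\<in>space (P n). a \<le> \<bar>Z \<omega>\<bar>}) = 1 - prob {\<omega>\<in>space (P n). a \<le> \<bar>Z \<omega>\<bar>}"
      by (rule prob_compl) measurable
    have c2: "prob (space (P n) - {\<omega>\<in>space (P n). a \<le> \<bar>Z \<omega>\<bar>}) \<le> prob (Z -` {-a<..a} \<inter> space (P n))"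
      by (rule finite_measure_mono) auto
    have "1 - \<epsilon> < prob (Z -` {-a<..a} \<inter> space (P n))" using m1 c1 c2 by simp
    then show "1 - \<epsilon> < measure (distr (P n) borel (\<lambda>\<omega>. Y n \<omega> - integral\<^sup>L (P n) (Y n))) {-a<..a}"
      unfolding Z_def[symmetric] by (subst measure_distr) auto
  qed
qed


lemma Max_abs_bound:
  fixes f :: "'b \<Rightarrow> real"
  assumes "finite A" "A \<noteq> {}"
  shows "\<bar>Max (f ` A)\<bar> \<le> (\<Sum>z\<in>A. \<bar>f z\<bar>)"
proof -
  have "Max (f ` A) \<in> f ` A" using assms by (intro Max_in) auto
  then obtain z0 where "z0 \<in> A" "Max (f ` A) = f z0" by auto
  then show ?thesis using assms by (metis (no_types, lifting) abs_ge_zero member_le_sum)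
qed

lemma field_max_meas:
  assumes "\<And>z. z \<in> box N \<Longrightarrow> X z \<in> borel_measurable M"
  shows "field_max N X \<in> borel_measurable M"
  unfolding field_max_def[abs_def] using assms by (intro borel_measurable_Max) auto

lemma box_ne: "box N \<noteq> {}" and box_00: "(0,0) \<in> box N"
  by (auto simp: box_def)

lemma field_max_int:
  assumes "\<And>z. z \<in> box N \<Longrightarrow> integrable M (X z)"
  shows "integrable M (field_max N X)"
proof (rule Bochner_Integration.integrable_bound)
  show "integrable M (\<lambda>\<omega>. \<Sum>z\<in>box N. \<bar>X z \<omega>\<bar>)" using assms by auto
  show "field_max N X \<in> borel_measurable M" using assms by (intro field_max_meas) auto
  show "AE \<omega> in M. norm (field_max N X \<omega>) \<le> norm (\<Sum>z\<in>box N. \<bar>X z \<omega>\<bar>)"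
    using Max_abs_bound[OF finite_box box_ne] by (auto simp: field_max_def)
qed

definition Phi :: "site set \<Rightarrow> (site \<Rightarrow> real) \<Rightarrow> real" where
  "Phi D v = Max (insert 0 (v ` D))"

lemma Phi_ge0: "finite D \<Longrightarrow> 0 \<le> Phi D v"
  unfolding Phi_def by (rule Max_ge) auto

lemma Phi_ge: "finite D \<Longrightarrow> x \<in> D \<Longrightarrow> v x \<le> Phi D v"
  unfolding Phi_def by (rule Max_ge) auto

lemma Phi_le: "finite D \<Longrightarrow> 0 \<le> c \<Longrightarrow> (\<And>x. x \<in> D \<Longrightarrow> v x \<le> c) \<Longrightarrow> Phi D v \<le> c"
  unfolding Phi_def by (auto simp: Max_le_iff)

lemma Phi_cong: "(\<And>x. x \<in> D \<Longrightarrow> v x = w x) \<Longrightarrow> Phi D v = Phi D w"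
  unfolding Phi_def by (intro arg_cong[where f=Max] arg_cong[where f="insert 0"] image_cong) auto

lemma Phi_abs: "finite D \<Longrightarrow> \<bar>Phi D v\<bar> \<le> (\<Sum>x\<in>D. \<bar>v x\<bar>)"
proof -
  assume D: "finite D"
  have "Phi D v \<le> (\<Sum>x\<in>D. \<bar>v x\<bar>)"
  proof (rule Phi_le[OF D])
    show "0 \<le> (\<Sum>x\<in>D. \<bar>v x\<bar>)" by (simp add: sum_nonneg)
    fix x assume "x \<in> D"
    then have "\<bar>v x\<bar> \<le> (\<Sum>x\<in>D. \<bar>v x\<bar>)" using D by (intro member_le_sum) auto
    then show "v x \<le> (\<Sum>x\<in>D. \<bar>v x\<bar>)" by simp
  qed
  then show ?thesis using Phi_ge0[OF D, of v] by simp
qed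

lemma Phi_meas:
  assumes "finite D" "\<And>z. z \<in> D \<Longrightarrow> U z \<in> borel_measurable M"
  shows "(\<lambda>\<omega>. Phi D (\<lambda>z. U z \<omega>)) \<in> borel_measurable M"
proof (cases "D = {}")
  case True then show ?thesis by (simp add: Phi_def)
next
  case False
  then have "Phi D (\<lambda>z. U z \<omega>) = max 0 (Max ((\<lambda>z. U z \<omega>) ` D))" for \<omega>
    unfolding Phi_def using assms(1) by (subst Max_insert) auto
  moreover have "(\<lambda>\<omega>. max 0 (Max ((\<lambda>z. U z \<omega>) ` D))) \<in> borel_measurable M"
    using assms by (intro borel_measurable_max borel_measurable_Max) auto
  ultimately show ?thesis by simp
qed

lemma Phi_meas_PiM:
  assumes "finite D"
  shows "Phi D \<in> borel_measurable (PiM D (\<lambda>_. borel))"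
proof -
  have "(\<lambda>v. Phi D (\<lambda>z. v z)) \<in> borel_measurable (PiM D (\<lambda>_. borel))"
    using assms by (intro Phi_meas) (auto intro: measurable_component_singleton)
  then show ?thesis by simp
qed

lemma Phi_int:
  assumes "finite D" "\<And>z. z \<in> D \<Longrightarrow> integrable M (U z)"
  shows "integrable M (\<lambda>\<omega>. Phi D (\<lambda>z. U z \<omega>))"
proof (rule Bochner_Integration.integrable_bound)
  show "integrable M (\<lambda>\<omega>. \<Sum>z\<in>D. \<bar>U z \<omega>\<bar>)" using assms by auto
  show "(\<lambda>\<omega>. Phi D (\<lambda>z. U z \<omega>)) \<in> borel_measurable M" using assms by (intro Phi_meas) auto
  show "AE \<omega> in M. norm (Phi D (\<lambda>z. U z \<omega>)) \<le> norm (\<Sum>z\<in>D. \<bar>U z \<omega>\<bar>)"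
    using Phi_abs[OF assms(1)] by auto
qed


lemma quad_swap:
  fixes a :: "'x \<Rightarrow> real" and f :: "'x \<Rightarrow> 'w \<Rightarrow> real" and g :: "'w \<Rightarrow> 'w \<Rightarrow> real"
  shows "(\<Sum>x\<in>A. \<Sum>y\<in>A. a x * a y * (\<Sum>w\<in>B. \<Sum>w'\<in>B. f x w * g w w' * f y w'))
       = (\<Sum>w\<in>B. \<Sum>w'\<in>B. (\<Sum>x\<in>A. a x * f x w) * (\<Sum>y\<in>A. a y * f y w') * g w w')"
proof -
  define T where "T x y w w' = a x * f x w * (a y * f y w') * g w w'" for x y w w'
  have "(\<Sum>x\<in>A. \<Sum>y\<in>A. a x * a y * (\<Sum>w\<in>B. \<Sum>w'\<in>B. f x w * g w w' * f y w'))
      = (\<Sum>x\<in>A. \<Sum>y\<in>A. \<Sum>w\<in>B. \<Sum>w'\<in>B. T x y w w')"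
    unfolding T_def by (simp add: sum_distrib_left mult_ac)
  also have "\<dots> = (\<Sum>x\<in>A. \<Sum>w\<in>B. \<Sum>y\<in>A. \<Sum>w'\<in>B. T x y w w')"
    by (intro sum.cong refl) (rule sum.swap)
  also have "\<dots> = (\<Sum>w\<in>B. \<Sum>x\<in>A. \<Sum>y\<in>A. \<Sum>w'\<in>B. T x y w w')"
    by (rule sum.swap)
  also have "\<dots> = (\<Sum>w\<in>B. \<Sum>x\<in>A. \<Sum>w'\<in>B. \<Sum>y\<in>A. T x y w w')"
    by (intro sum.cong refl) (rule sum.swap)
  also have "\<dots> = (\<Sum>w\<in>B. \<Sum>w'\<in>B. \<Sum>x\<in>A. \<Sum>y\<in>A. T x y w w')"
    by (intro sum.cong refl) (rule sum.swap)
  also have "\<dots> = (\<Sum>w\<in>B. \<Sum>w'\<in>B. (\<Sum>x\<in>A. a x * f x w) * (\<Sum>y\<in>A. a y * f y w') * g w w')"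
  proof (intro sum.cong refl)
    fix w w'
    have "(\<Sum>x\<in>A. a x * f x w) * (\<Sum>y\<in>A. a y * f y w') * g w w' = (\<Sum>x\<in>A. \<Sum>y\<in>A. a x * f x w * (a y * f y w')) * g w w'"
      by (simp only: sum_product)
    also have "\<dots> = (\<Sum>x\<in>A. \<Sum>y\<in>A. T x y w w')"
      unfolding T_def by (simp add: sum_distrib_right)
    finally show "(\<Sum>x\<in>A. \<Sum>y\<in>A. T x y w w') = (\<Sum>x\<in>A. a x * f x w) * (\<Sum>y\<in>A. a y * f y w') * g w w'" by simp
  qed
  finally show ?thesis .
qed

definition Fc :: "nat \<Rightarrow> site \<Rightarrow> site \<Rightarrow> real" where
  "Fc N x w = (\<Sum>a\<in>Dp N. Gp N x a * kill_kernel (2 * N) a w)"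

definition Sset :: "nat \<Rightarrow> site set" where "Sset N = box_int (2 * N) - Dp N"

lemma cov_identity:
  fixes t :: "site \<Rightarrow> real"
  shows "(\<Sum>x\<in>Dp N. \<Sum>y\<in>Dp N. t x * t y * green (2 * N) x y)
    = (\<Sum>a\<in>box_int N. \<Sum>b\<in>box_int N. t a * t b * green N a b)
    + (\<Sum>a\<in>box_int N. \<Sum>b\<in>box_int N. t (unsh N a) * t (unsh N b) * green N a b)
    + (\<Sum>w\<in>Sset N. \<Sum>w'\<in>Sset N. (\<Sum>x\<in>Dp N. t x * Fc N x w) * (\<Sum>y\<in>Dp N. t y * Fc N y w') * green (2 * N) w w')"
proof -
  have "(\<Sum>x\<in>Dp N. \<Sum>y\<in>Dp N. t x * t y * green (2 * N) x y)
     = (\<Sum>x\<in>Dp N. \<Sum>y\<in>Dp N. t x * t y * green N x y)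
     + (\<Sum>x\<in>Dp N. \<Sum>y\<in>Dp N. t x * t y * green N (shN N x) (shN N y))
     + (\<Sum>x\<in>Dp N. \<Sum>y\<in>Dp N. t x * t y * (\<Sum>w\<in>Sset N. \<Sum>w'\<in>Sset N. Fc N x w * green (2 * N) w w' * Fc N y w'))"
    by (simp add: green_decomp Gp_def Fc_def Sset_def distrib_left sum.distrib cong: sum.cong)
  also have "(\<Sum>x\<in>Dp N. \<Sum>y\<in>Dp N. t x * t y * green N x y) = (\<Sum>a\<in>box_int N. \<Sum>b\<in>box_int N. t a * t b * green N a b)"
  proof -
    have "(\<Sum>x\<in>Dp N. \<Sum>y\<in>Dp N. t x * t y * green N x y) = (\<Sum>x\<in>Dp N. \<Sum>y\<in>box_int N. t x * t y * green N x y)"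
      by (intro sum.cong refl sum.mono_neutral_cong_right) (auto simp: Dp_def green_def)
    also have "\<dots> = (\<Sum>a\<in>box_int N. \<Sum>b\<in>box_int N. t a * t b * green N a b)"
      by (intro sum.mono_neutral_cong_right) (auto simp: Dp_def green_def intro!: sum.neutral)
    finally show ?thesis .
  qed
  also have "(\<Sum>x\<in>Dp N. \<Sum>y\<in>Dp N. t x * t y * green N (shN N x) (shN N y))
      = (\<Sum>a\<in>box_int N. \<Sum>b\<in>box_int N. t (unsh N a) * t (unsh N b) * green N a b)"
  proof -
    have "(\<Sum>x\<in>Dp N. \<Sum>y\<in>Dp N. t x * t y * green N (shN N x) (shN N y))
        = (\<Sum>x\<in>Dp N. \<Sum>y\<in>DB N. t x * t y * green N (shN N x) (shN N y))"
      by (intro sum.cong refl sum.mono_neutral_cong_right) (auto simp: Dp_def green_def DB_iff)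
    also have "\<dots> = (\<Sum>x\<in>DB N. \<Sum>y\<in>DB N. t x * t y * green N (shN N x) (shN N y))"
      by (intro sum.mono_neutral_cong_right) (auto simp: Dp_def green_def DB_iff intro!: sum.neutral)
    also have "\<dots> = (\<Sum>a\<in>box_int N. \<Sum>b\<in>box_int N. t (unsh N a) * t (unsh N b) * green N a b)"
      by (simp add: sum_DB)
    finally show ?thesis .
  qed
  also have "(\<Sum>x\<in>Dp N. \<Sum>y\<in>Dp N. t x * t y * (\<Sum>w\<in>Sset N. \<Sum>w'\<in>Sset N. Fc N x w * green (2 * N) w w' * Fc N y w'))
     = (\<Sum>w\<in>Sset N. \<Sum>w'\<in>Sset N. (\<Sum>x\<in>Dp N. t x * Fc N x w) * (\<Sum>y\<in>Dp N. t y * Fc N y w') * green (2 * N) w w')"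
    by (rule quad_swap)
  finally show ?thesis .
qed


lemma Sset_sub: "Sset N \<subseteq> box (2 * N)"
  using box_int_sub[of "2 * N"] by (auto simp: Sset_def)

lemma Dp_sub_box: "Dp N \<subseteq> box (2 * N)"
  using box_int_sub[of "2 * N"] Dp_sub[of N] by auto

lemma finite_Sset[simp]: "finite (Sset N)"
  by (simp add: Sset_def)

lemma notA_sh: "x \<in> Dp N \<Longrightarrow> x \<notin> box_int N \<Longrightarrow> shN N x \<in> box_int N"
  by (auto simp: Dp_def DB_iff)

lemma boundary_zero_max:
  fixes v :: "site \<Rightarrow> real"
  assumes "\<forall>z\<in>box N - box_int N. v z = 0"
  shows "Max (v ` box N) = Phi (box_int N) v"
proof -
  have "v ` box N = v ` box_int N \<union> v ` (box N - box_int N)"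
    using box_int_sub[of N] by blast
  also have "v ` (box N - box_int N) = {0}"
  proof -
    have z: "(0,0) \<in> box N - box_int N" by (auto simp: box_def box_int_def)
    show ?thesis
    proof
      show "v ` (box N - box_int N) \<subseteq> {0}" using assms by auto
      show "{0} \<subseteq> v ` (box N - box_int N)" using z assms by (auto intro!: image_eqI[where x="(0,0)"])
    qed
  qed
  finally show ?thesis unfolding Phi_def by simp
qed

lemma Phi_split:
  fixes q1 q2 :: "site \<Rightarrow> real"
  shows "Phi (Dp N) (\<lambda>x. if x \<in> box_int N then q1 x else q2 (shN N x)) = max (Phi (box_int N) q1) (Phi (box_int N) q2)"
proof -
  have "(\<lambda>x. if x \<in> box_int N then q1 x else q2 (shN N x)) ` Dp N = q1 ` box_int N \<union> q2 ` box_int N"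
  proof -
    have "(\<lambda>x. if x \<in> box_int N then q1 x else q2 (shN N x)) ` box_int N = q1 ` box_int N" by auto
    moreover have "(\<lambda>x. if x \<in> box_int N then q1 x else q2 (shN N x)) ` DB N = q2 ` box_int N"
    proof -
      have "(\<lambda>x. if x \<in> box_int N then q1 x else q2 (shN N x)) ` DB N
          = (\<lambda>u. if unsh N u \<in> box_int N then q1 (unsh N u) else q2 (shN N (unsh N u))) ` box_int N"
        unfolding DB_def image_image ..
      also have "\<dots> = q2 ` box_int N"
      proof (intro image_cong refl)
        fix u assume "u \<in> box_int N"
        then have "unsh N u \<in> DB N" unfolding DB_def by auto
        then show "(if unsh N u \<in> box_int N then q1 (unsh N u) else q2 (shN N (unsh N u))) = q2 u"
          using B_not_A by auto
      qed
      finally show ?thesis .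
    qed
    ultimately show ?thesis unfolding Dp_def image_Un by (simp only:)
  qed
  then have E: "insert 0 ((\<lambda>x. if x \<in> box_int N then q1 x else q2 (shN N x)) ` Dp N) = insert 0 (q1 ` box_int N) \<union> insert 0 (q2 ` box_int N)"
    by auto
  have M: "Max (insert 0 (q1 ` box_int N) \<union> insert 0 (q2 ` box_int N)) = max (Max (insert 0 (q1 ` box_int N))) (Max (insert 0 (q2 ` box_int N)))"
    by (rule Max_Un) auto
  show ?thesis unfolding Phi_def E by (rule M)
qed


lemma unsh_notA: "u \<in> box_int N \<Longrightarrow> unsh N u \<notin> box_int N"
  using B_not_A[of "unsh N u" N] by (auto simp: DB_def)

lemma exp3: "complex_of_real (exp (- a / 2)) * complex_of_real (exp (- b / 2)) * complex_of_real (exp (- c / 2))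
    = complex_of_real (exp (- (a + b + c) / 2))"
proof -
  have "exp (- a / 2) * exp (- b / 2) * exp (- c / 2) = exp (- (a + b + c) / 2)"
    by (simp add: exp_add[symmetric] field_simps)
  then show ?thesis by (simp only: of_real_mult[symmetric])
qed

lemma comparison:
  fixes P1 P2 :: "'a measure" and X1 X2 :: "site \<Rightarrow> 'a \<Rightarrow> real"
  assumes c2: "centered_gaussian_field P2 (box N) X2 (green N)"
    and c1: "centered_gaussian_field P1 (box (2 * N)) X1 (green (2 * N))"
  shows "(\<integral>q. max (field_max N X2 (fst q)) (field_max N X2 (snd q)) \<partial>(P2 \<Otimes>\<^sub>M P2))
     \<le> integral\<^sup>L P1 (field_max (2 * N) X1)"
proof -
  have P1: "prob_space P1" using cgf_prob[OF c1] .
  have P2: "prob_space P2" using cgf_prob[OF c2] .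
  interpret P1: prob_space P1 by fact
  interpret P2: prob_space P2 by fact
  interpret Q: pair_prob_space P2 P2
    using P2 by (auto simp: pair_prob_space_def pair_sigma_finite_def prob_space_imp_sigma_finite)
  have PQ: "prob_space (P2 \<Otimes>\<^sub>M P2)" by (intro prob_space_pair P2)
  interpret Om: pair_prob_space "P2 \<Otimes>\<^sub>M P2" P1
    using PQ P1 by (auto simp: pair_prob_space_def pair_sigma_finite_def prob_space_imp_sigma_finite)
  have POm: "prob_space ((P2 \<Otimes>\<^sub>M P2) \<Otimes>\<^sub>M P1)" by (intro prob_space_pair PQ P1)
  have X1m[measurable]: "X1 z \<in> borel_measurable P1" if "z \<in> box (2 * N)" for z using cgf_meas[OF c1 that] .
  have X2m[measurable]: "X2 z \<in> borel_measurable P2" if "z \<in> box N" for z using cgf_meas[OF c2 that] .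
  have X1i: "integrable P1 (X1 z)" and X1e: "integral\<^sup>L P1 (X1 z) = 0" if "z \<in> box (2 * N)" for z
    using cgf_coord_props[OF c1 finite_box that] by auto
  have X2i: "integrable P2 (X2 z)" if "z \<in> box N" for z
    using cgf_coord_props[OF c2 finite_box that] by auto
  define h where "h x \<omega> = (\<Sum>w\<in>Sset N. Fc N x w * X1 w \<omega>)" for x \<omega>
  define W where "W x q = (if x \<in> box_int N then X2 x (fst q) else X2 (shN N x) (snd q))" for x q
  define V where "V x \<omega> = W x (fst \<omega>) + h x (snd \<omega>)" for x \<omega>
  have hi: "integrable P1 (h x)" for x
    unfolding h_def[abs_def] by (intro Bochner_Integration.integrable_sum Bochner_Integration.integrable_mult_right) (use Sset_sub X1i in auto)
  have he: "integral\<^sup>L P1 (h x) = 0" for x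
  proof -
    have "integral\<^sup>L P1 (h x) = (\<Sum>w\<in>Sset N. integral\<^sup>L P1 (\<lambda>\<omega>. Fc N x w * X1 w \<omega>))"
      unfolding h_def[abs_def] by (rule Bochner_Integration.integral_sum) (use Sset_sub X1i in auto)
    also have "\<dots> = 0" using Sset_sub[of N] X1e by (auto intro!: sum.neutral)
    finally show ?thesis .
  qed
  have hm: "h x \<in> borel_measurable P1" for x using hi[of x] by auto
  have Wi: "integrable (P2 \<Otimes>\<^sub>M P2) (W x)" if "x \<in> Dp N" for x
  proof (cases "x \<in> box_int N")
    case True
    then show ?thesis unfolding W_def[abs_def] using int_fst(1)[OF P2 P2 X2i[of x]] box_int_sub by auto
  next
    case False
    then show ?thesis unfolding W_def[abs_def] using int_snd(1)[OF P2 P2 X2i[of "shN N x"]] box_int_sub notA_sh[OF that] by auto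
  qed
  have Vi: "integrable ((P2 \<Otimes>\<^sub>M P2) \<Otimes>\<^sub>M P1) (V x)" if "x \<in> Dp N" for x
    unfolding V_def[abs_def] using int_fst(1)[OF PQ P1 Wi[OF that]] int_snd(1)[OF PQ P1 hi[of x]] by auto
  have Vm: "V x \<in> borel_measurable ((P2 \<Otimes>\<^sub>M P2) \<Otimes>\<^sub>M P1)" if "x \<in> Dp N" for x using Vi[OF that] by auto
  have chV: "(CLINT \<omega>|(P2 \<Otimes>\<^sub>M P2) \<Otimes>\<^sub>M P1. iexp (\<Sum>x\<in>Dp N. t x * V x \<omega>))
     = complex_of_real (exp (- (\<Sum>x\<in>Dp N. \<Sum>y\<in>Dp N. t x * t y * green (2 * N) x y) / 2))" for t
  proof -
    define u where "u w = (\<Sum>x\<in>Dp N. t x * Fc N x w)" for w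
    define fa where "fa \<omega> = (\<Sum>x\<in>box_int N. t x * X2 x \<omega>)" for \<omega>
    define fb where "fb \<omega> = (\<Sum>a\<in>box_int N. t (unsh N a) * X2 a \<omega>)" for \<omega>
    define g1 where "g1 \<omega> = (\<Sum>w\<in>Sset N. u w * X1 w \<omega>)" for \<omega>
    have fam[measurable]: "fa \<in> borel_measurable P2" unfolding fa_def[abs_def]
      by (intro borel_measurable_sum borel_measurable_times borel_measurable_const) (use box_int_sub[of N] in \<open>auto intro!: X2m\<close>)
    have fbm[measurable]: "fb \<in> borel_measurable P2" unfolding fb_def[abs_def]
      by (intro borel_measurable_sum borel_measurable_times borel_measurable_const) (use box_int_sub[of N] in \<open>auto intro!: X2m\<close>)
    have g1m[measurable]: "g1 \<in> borel_measurable P1" unfolding g1_def[abs_def]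
      by (intro borel_measurable_sum borel_measurable_times borel_measurable_const) (use Sset_sub[of N] in \<open>auto intro!: X1m\<close>)
    have pw: "(\<Sum>x\<in>Dp N. t x * V x \<omega>) = (fa (fst (fst \<omega>)) + fb (snd (fst \<omega>))) + g1 (snd \<omega>)" for \<omega>
    proof -
      have "(\<Sum>x\<in>Dp N. t x * V x \<omega>) = (\<Sum>x\<in>Dp N. t x * W x (fst \<omega>)) + (\<Sum>x\<in>Dp N. t x * h x (snd \<omega>))"
        unfolding V_def by (simp add: distrib_left sum.distrib)
      also have "(\<Sum>x\<in>Dp N. t x * W x (fst \<omega>)) = fa (fst (fst \<omega>)) + fb (snd (fst \<omega>))"
      proof -
        have "(\<Sum>x\<in>Dp N. t x * W x (fst \<omega>)) = (\<Sum>x\<in>box_int N. t x * W x (fst \<omega>)) + (\<Sum>x\<in>DB N. t x * W x (fst \<omega>))"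
          by (rule sum_Dp)
        also have "(\<Sum>x\<in>box_int N. t x * W x (fst \<omega>)) = fa (fst (fst \<omega>))"
          unfolding fa_def W_def by (intro sum.cong refl) auto
        also have "(\<Sum>x\<in>DB N. t x * W x (fst \<omega>)) = fb (snd (fst \<omega>))"
          unfolding fb_def W_def sum_DB
          by (intro sum.cong refl) (auto simp: unsh_notA)
        finally show ?thesis .
      qed
      also have "(\<Sum>x\<in>Dp N. t x * h x (snd \<omega>)) = g1 (snd \<omega>)"
      proof -
        have "(\<Sum>x\<in>Dp N. t x * h x (snd \<omega>)) = (\<Sum>x\<in>Dp N. \<Sum>w\<in>Sset N. t x * Fc N x w * X1 w (snd \<omega>))"
          unfolding h_def by (simp add: sum_distrib_left mult.assoc)
        also have "\<dots> = (\<Sum>w\<in>Sset N. \<Sum>x\<in>Dp N. t x * Fc N x w * X1 w (snd \<omega>))"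
          by (rule sum.swap)
        also have "\<dots> = g1 (snd \<omega>)"
          unfolding g1_def u_def by (simp add: sum_distrib_right)
        finally show ?thesis .
      qed
      finally show ?thesis .
    qed
    have "(CLINT \<omega>|(P2 \<Otimes>\<^sub>M P2) \<Otimes>\<^sub>M P1. iexp (\<Sum>x\<in>Dp N. t x * V x \<omega>))
        = (CLINT \<omega>|(P2 \<Otimes>\<^sub>M P2) \<Otimes>\<^sub>M P1. iexp ((\<lambda>q. fa (fst q) + fb (snd q)) (fst \<omega>) + g1 (snd \<omega>)))"
      unfolding pw by simp
    also have "\<dots> = (CLINT q|P2 \<Otimes>\<^sub>M P2. iexp (fa (fst q) + fb (snd q))) * (CLINT \<omega>|P1. iexp (g1 \<omega>))"
      by (rule pair_char[OF PQ P1]) measurable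
    also have "(CLINT q|P2 \<Otimes>\<^sub>M P2. iexp (fa (fst q) + fb (snd q))) = (CLINT \<omega>|P2. iexp (fa \<omega>)) * (CLINT \<omega>|P2. iexp (fb \<omega>))"
      by (rule pair_char[OF P2 P2]) measurable
    also have "(CLINT \<omega>|P2. iexp (fa \<omega>)) = complex_of_real (exp (- (\<Sum>a\<in>box_int N. \<Sum>b\<in>box_int N. t a * t b * green N a b) / 2))"
      unfolding fa_def by (rule cgf_sub[OF c2 finite_box box_int_sub])
    also have "(CLINT \<omega>|P2. iexp (fb \<omega>)) = complex_of_real (exp (- (\<Sum>a\<in>box_int N. \<Sum>b\<in>box_int N. t (unsh N a) * t (unsh N b) * green N a b) / 2))"
      unfolding fb_def by (rule cgf_sub[OF c2 finite_box box_int_sub])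
    also have "(CLINT \<omega>|P1. iexp (g1 \<omega>)) = complex_of_real (exp (- (\<Sum>w\<in>Sset N. \<Sum>w'\<in>Sset N. u w * u w' * green (2 * N) w w') / 2))"
      unfolding g1_def by (rule cgf_sub[OF c1 finite_box Sset_sub])
    also note exp3
    finally show ?thesis
      unfolding cov_identity u_def[symmetric] .
  qed
  have chX: "(CLINT \<omega>|P1. iexp (\<Sum>x\<in>Dp N. t x * X1 x \<omega>))
     = complex_of_real (exp (- (\<Sum>x\<in>Dp N. \<Sum>y\<in>Dp N. t x * t y * green (2 * N) x y) / 2))" for t
    using cgf_sub[OF c1 finite_box Dp_sub_box] .
  have deq: "distr P1 (PiM (Dp N) (\<lambda>_. borel)) (\<lambda>\<omega>. \<lambda>z\<in>Dp N. X1 z \<omega>)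
      = distr ((P2 \<Otimes>\<^sub>M P2) \<Otimes>\<^sub>M P1) (PiM (Dp N) (\<lambda>_. borel)) (\<lambda>\<omega>. \<lambda>z\<in>Dp N. V z \<omega>)"
  proof (rule mv_distr_eq[OF finite_Dp P1 POm])
    show "X1 z \<in> borel_measurable P1" if "z \<in> Dp N" for z using Dp_sub_box[of N] X1m that by auto
    show "V z \<in> borel_measurable ((P2 \<Otimes>\<^sub>M P2) \<Otimes>\<^sub>M P1)" if "z \<in> Dp N" for z using Vm that by auto
    show "(CLINT \<omega>|P1. iexp (\<Sum>z\<in>Dp N. t z * X1 z \<omega>)) = (CLINT \<omega>|(P2 \<Otimes>\<^sub>M P2) \<Otimes>\<^sub>M P1. iexp (\<Sum>z\<in>Dp N. t z * V z \<omega>))" for t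
      by (simp only: chX chV)
  qed
  have I1: "(\<integral>\<omega>. Phi (Dp N) (\<lambda>z. X1 z \<omega>) \<partial>P1) = (\<integral>\<omega>. Phi (Dp N) (\<lambda>z. V z \<omega>) \<partial>((P2 \<Otimes>\<^sub>M P2) \<Otimes>\<^sub>M P1))"
  proof -
    have "(\<integral>\<omega>. Phi (Dp N) (\<lambda>z. X1 z \<omega>) \<partial>P1) = (\<integral>\<omega>. Phi (Dp N) (\<lambda>z\<in>Dp N. X1 z \<omega>) \<partial>P1)"
      by (intro Bochner_Integration.integral_cong refl Phi_cong) auto
    also have "\<dots> = (\<integral>v. Phi (Dp N) v \<partial>distr P1 (PiM (Dp N) (\<lambda>_. borel)) (\<lambda>\<omega>. \<lambda>z\<in>Dp N. X1 z \<omega>))"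
    proof (rule integral_distr[symmetric])
      show "(\<lambda>\<omega>. \<lambda>z\<in>Dp N. X1 z \<omega>) \<in> measurable P1 (PiM (Dp N) (\<lambda>_. borel))"
        by (rule measurable_restrict) (use Dp_sub_box[of N] X1m in auto)
    qed (rule Phi_meas_PiM[OF finite_Dp])
    also have "\<dots> = (\<integral>v. Phi (Dp N) v \<partial>distr ((P2 \<Otimes>\<^sub>M P2) \<Otimes>\<^sub>M P1) (PiM (Dp N) (\<lambda>_. borel)) (\<lambda>\<omega>. \<lambda>z\<in>Dp N. V z \<omega>))"
      by (simp only: deq)
    also have "\<dots> = (\<integral>\<omega>. Phi (Dp N) (\<lambda>z\<in>Dp N. V z \<omega>) \<partial>((P2 \<Otimes>\<^sub>M P2) \<Otimes>\<^sub>M P1))"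
    proof (rule integral_distr)
      show "(\<lambda>\<omega>. \<lambda>z\<in>Dp N. V z \<omega>) \<in> measurable ((P2 \<Otimes>\<^sub>M P2) \<Otimes>\<^sub>M P1) (PiM (Dp N) (\<lambda>_. borel))"
        by (rule measurable_restrict) (use Vm in auto)
    qed (rule Phi_meas_PiM[OF finite_Dp])
    also have "\<dots> = (\<integral>\<omega>. Phi (Dp N) (\<lambda>z. V z \<omega>) \<partial>((P2 \<Otimes>\<^sub>M P2) \<Otimes>\<^sub>M P1))"
      by (intro Bochner_Integration.integral_cong refl Phi_cong) auto
    finally show ?thesis .
  qed
  have I2: "(\<integral>\<omega>. Phi (Dp N) (\<lambda>z. X1 z \<omega>) \<partial>P1) \<le> integral\<^sup>L P1 (field_max (2 * N) X1)"
  proof (rule integral_mono_AE)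
    show "integrable P1 (\<lambda>\<omega>. Phi (Dp N) (\<lambda>z. X1 z \<omega>))"
      by (rule Phi_int[OF finite_Dp]) (use Dp_sub_box[of N] in \<open>auto intro!: X1i\<close>)
    show "integrable P1 (field_max (2 * N) X1)"
      by (rule field_max_int) (rule X1i)
    have g0: "green (2 * N) (0,0) (0,0) = 0" by (simp add: green_def box_int_def)
    have "AE \<omega> in P1. X1 (0,0) \<omega> = 0"
      using cgf_coord_props(3)[OF c1 finite_box box_00 g0] .
    then show "AE \<omega> in P1. Phi (Dp N) (\<lambda>z. X1 z \<omega>) \<le> field_max (2 * N) X1 \<omega>"
    proof eventually_elim
      case (elim \<omega>)
      have ge: "X1 z \<omega> \<le> field_max (2 * N) X1 \<omega>" if "z \<in> box (2 * N)" for z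
        unfolding field_max_def using that by (intro Max_ge) auto
      show ?case
      proof (rule Phi_le[OF finite_Dp])
        show "0 \<le> field_max (2 * N) X1 \<omega>" using ge[OF box_00] elim by simp
        show "X1 x \<omega> \<le> field_max (2 * N) X1 \<omega>" if "x \<in> Dp N" for x
          using ge that Dp_sub_box[of N] by blast
      qed
    qed
  qed
  \<comment> \<open>Jensen step\<close>
  have I3: "(\<integral>q. Phi (Dp N) (\<lambda>z. W z q) \<partial>(P2 \<Otimes>\<^sub>M P2)) \<le> (\<integral>\<omega>. Phi (Dp N) (\<lambda>z. V z \<omega>) \<partial>((P2 \<Otimes>\<^sub>M P2) \<Otimes>\<^sub>M P1))"
  proof -
    have PVi: "integrable ((P2 \<Otimes>\<^sub>M P2) \<Otimes>\<^sub>M P1) (\<lambda>\<omega>. Phi (Dp N) (\<lambda>z. V z \<omega>))"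
      by (rule Phi_int[OF finite_Dp]) (rule Vi)
    have "(\<integral>q. Phi (Dp N) (\<lambda>z. W z q) \<partial>(P2 \<Otimes>\<^sub>M P2)) \<le> (\<integral>q. (\<integral>\<omega>. Phi (Dp N) (\<lambda>z. V z (q, \<omega>)) \<partial>P1) \<partial>(P2 \<Otimes>\<^sub>M P2))"
    proof (rule integral_mono)
      show "integrable (P2 \<Otimes>\<^sub>M P2) (\<lambda>q. Phi (Dp N) (\<lambda>z. W z q))"
        by (rule Phi_int[OF finite_Dp]) (rule Wi)
      show "integrable (P2 \<Otimes>\<^sub>M P2) (\<lambda>q. \<integral>\<omega>. Phi (Dp N) (\<lambda>z. V z (q, \<omega>)) \<partial>P1)"
        using Om.integrable_fst'[OF PVi] by simp
      fix q
      have Ii: "integrable P1 (\<lambda>\<omega>. Phi (Dp N) (\<lambda>z. V z (q, \<omega>)))"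
        unfolding V_def by (rule Phi_int[OF finite_Dp]) (use hi in auto)
      show "Phi (Dp N) (\<lambda>z. W z q) \<le> (\<integral>\<omega>. Phi (Dp N) (\<lambda>z. V z (q, \<omega>)) \<partial>P1)"
      proof (rule Phi_le[OF finite_Dp])
        show "0 \<le> (\<integral>\<omega>. Phi (Dp N) (\<lambda>z. V z (q, \<omega>)) \<partial>P1)"
          by (intro Bochner_Integration.integral_nonneg Phi_ge0 finite_Dp)
        fix x assume x: "x \<in> Dp N"
        have "W x q = (\<integral>\<omega>. W x q + h x \<omega> \<partial>P1)"
          using hi[of x] he[of x] by (simp add: P1.prob_space)
        also have "\<dots> \<le> (\<integral>\<omega>. Phi (Dp N) (\<lambda>z. V z (q, \<omega>)) \<partial>P1)"
        proof (rule integral_mono[OF _ Ii])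
          show "integrable P1 (\<lambda>\<omega>. W x q + h x \<omega>)" using hi[of x] by simp
          fix \<omega> show "W x q + h x \<omega> \<le> Phi (Dp N) (\<lambda>z. V z (q, \<omega>))"
            using Phi_ge[OF finite_Dp x, of "\<lambda>z. V z (q, \<omega>)"] by (simp add: V_def)
        qed
        finally show "W x q \<le> (\<integral>\<omega>. Phi (Dp N) (\<lambda>z. V z (q, \<omega>)) \<partial>P1)" .
      qed
    qed
    also have "\<dots> = (\<integral>\<omega>. Phi (Dp N) (\<lambda>z. V z \<omega>) \<partial>((P2 \<Otimes>\<^sub>M P2) \<Otimes>\<^sub>M P1))"
      using Om.integral_fst'[OF PVi] by simp
    finally show ?thesis .
  qed
  have I4: "(\<integral>q. max (field_max N X2 (fst q)) (field_max N X2 (snd q)) \<partial>(P2 \<Otimes>\<^sub>M P2)) = (\<integral>q. Phi (Dp N) (\<lambda>z. W z q) \<partial>(P2 \<Otimes>\<^sub>M P2))"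
  proof (rule integral_cong_AE)
    have Ym: "field_max N X2 \<in> borel_measurable P2" by (rule field_max_meas) (rule X2m)
    then show "(\<lambda>q. max (field_max N X2 (fst q)) (field_max N X2 (snd q))) \<in> borel_measurable (P2 \<Otimes>\<^sub>M P2)"
      by measurable
    show "(\<lambda>q. Phi (Dp N) (\<lambda>z. W z q)) \<in> borel_measurable (P2 \<Otimes>\<^sub>M P2)"
      by (rule Phi_meas[OF finite_Dp]) (use Wi in auto)
    have bd: "AE \<omega> in P2. \<forall>z\<in>box N - box_int N. X2 z \<omega> = 0"
    proof (subst AE_finite_all)
      show "finite (box N - box_int N)" by simp
      show "\<forall>z\<in>box N - box_int N. AE \<omega> in P2. X2 z \<omega> = 0"
        using cgf_coord_props(3)[OF c2 finite_box] by (auto simp: green_def)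
    qed
    define A where "A \<omega> \<longleftrightarrow> (\<forall>z\<in>box N - box_int N. X2 z \<omega> = 0)" for \<omega>
    have Am: "{\<omega> \<in> space P2. A \<omega>} \<in> sets P2"
      unfolding A_def
    proof (rule sets.sets_Collect_finite_All')
      fix z assume "z \<in> box N - box_int N"
      then have [measurable]: "X2 z \<in> borel_measurable P2" using X2m by auto
      show "{\<omega> \<in> space P2. X2 z \<omega> = 0} \<in> sets P2" by measurable
    next
      show "box N - box_int N \<noteq> {}" using box_00[of N] by (auto simp: box_int_def)
    qed simp
    have bdQ: "AE q in P2 \<Otimes>\<^sub>M P2. A (fst q) \<and> A (snd q)"
    proof (rule Q.AE_pair_measure)
      have "{q \<in> space (P2 \<Otimes>\<^sub>M P2). A (fst q) \<and> A (snd q)} = {\<omega> \<in> space P2. A \<omega>} \<times> {\<omega> \<in> space P2. A \<omega>}"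
        by (auto simp: space_pair_measure)
      then show "{q \<in> space (P2 \<Otimes>\<^sub>M P2). A (fst q) \<and> A (snd q)} \<in> sets (P2 \<Otimes>\<^sub>M P2)"
        using Am by simp
      have bd': "AE \<omega> in P2. A \<omega>" using bd unfolding A_def .
      then show "AE x in P2. AE y in P2. A (fst (x, y)) \<and> A (snd (x, y))"
      proof eventually_elim
        case (elim x)
        from bd' show ?case by eventually_elim (use elim in simp)
      qed
    qed
    then show "AE q in P2 \<Otimes>\<^sub>M P2. max (field_max N X2 (fst q)) (field_max N X2 (snd q)) = Phi (Dp N) (\<lambda>z. W z q)"
    proof eventually_elim
      case (elim q)
      have "field_max N X2 (fst q) = Phi (box_int N) (\<lambda>z. X2 z (fst q))"
        unfolding field_max_def by (rule boundary_zero_max) (use elim in \<open>auto simp: A_def\<close>)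
      moreover have "field_max N X2 (snd q) = Phi (box_int N) (\<lambda>z. X2 z (snd q))"
        unfolding field_max_def by (rule boundary_zero_max) (use elim in \<open>auto simp: A_def\<close>)
      moreover have "Phi (Dp N) (\<lambda>z. W z q) = max (Phi (box_int N) (\<lambda>z. X2 z (fst q))) (Phi (box_int N) (\<lambda>z. X2 z (snd q)))"
        unfolding W_def by (rule Phi_split)
      ultimately show ?case by simp
    qed
  qed
  show ?thesis using I1 I2 I3 I4 by linarith
qed


theorem mainTheorem6:
  fixes M :: "nat \<Rightarrow> 'a measure"
    and X :: "nat \<Rightarrow> site \<Rightarrow> 'a \<Rightarrow> real"
    and C :: real
  assumes gff: "\<And>N. N \<ge> 1 \<Longrightarrow> is_dgff (M N) N (X N)"
    and doubling: "\<And>N. N \<ge> 1 \<Longrightarrow>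
        integral\<^sup>L (M (2 * N)) (field_max (2 * N) (X (2 * N)))
          \<le> integral\<^sup>L (M N) (field_max N (X N)) + C"
  shows "tight (\<lambda>n. distr (M (Suc n)) borel
           (\<lambda>\<omega>. field_max (Suc n) (X (Suc n)) \<omega>
                  - integral\<^sup>L (M (Suc n)) (field_max (Suc n) (X (Suc n)))))"
proof (rule tight_from_bound)
  fix n
  have c2: "centered_gaussian_field (M (Suc n)) (box (Suc n)) (X (Suc n)) (green (Suc n))"
    using gff[of "Suc n"] by (simp add: is_dgff_def)
  have c1: "centered_gaussian_field (M (2 * Suc n)) (box (2 * Suc n)) (X (2 * Suc n)) (green (2 * Suc n))"
    using gff[of "2 * Suc n"] by (simp add: is_dgff_def)
  show P: "prob_space (M (Suc n))" using cgf_prob[OF c2] .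
  show Yi: "integrable (M (Suc n)) (field_max (Suc n) (X (Suc n)))"
    by (rule field_max_int) (use cgf_coord_props(1)[OF c2 finite_box] in auto)
  have "(\<integral>q. max (field_max (Suc n) (X (Suc n)) (fst q)) (field_max (Suc n) (X (Suc n)) (snd q)) \<partial>(M (Suc n) \<Otimes>\<^sub>M M (Suc n)))
      \<le> integral\<^sup>L (M (2 * Suc n)) (field_max (2 * Suc n) (X (2 * Suc n)))"
    by (rule comparison[OF c2 c1])
  also have "\<dots> \<le> integral\<^sup>L (M (Suc n)) (field_max (Suc n) (X (Suc n))) + C"
    using doubling[of "Suc n"] by simp
  finally show "(\<integral>\<omega>. \<bar>field_max (Suc n) (X (Suc n)) \<omega> - integral\<^sup>L (M (Suc n)) (field_max (Suc n) (X (Suc n)))\<bar> \<partial>M (Suc n)) \<le> 2 * C"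
    by (rule tail_lemma[OF P Yi])
qed


end
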